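(* Let $n\in\mathbb{N}_0$ and $P_n\in M_n$ with $P_n\neq 0$. Then the polynomials $H_{s,\mu,P_n}$, $s\in\mathbb{N}_0$, form a basis of the complex vector space $R(P_n)$.
   Context: Let $d\ge 2$. $\mathbb{R}_{0,d}$ is the real Clifford algebra generated by $e_1,\dots,e_d$ with $e_ie_j+e_je_i=-2\delta_{ij}$; vectors $x$ are identified with $\sum_ix_ie_i$. $R$ is a root system with reflection group $W$, positive subsystem $R_+$, $\kappa:R\to[0,\infty)$ a $W$-invariant multiplicity function with $\gamma_\kappa=\sum_{\alpha\in R_+}\kappa(\alpha)>0$, $\mu=2\gamma_\kappa+d$. Dunkl operators $T_if(x)=\partial_{x_i}f(x)+\sum_{\alpha\in R_+}\kappa(\alpha)\frac{f(x)-f(\sigma_\alpha x)}{\langle\alpha,x\rangle}\alpha_i$; Dunkl–Dirac operator $D_h=\sum_ie_iT_i$. $M_n$: $\mathbb{C}\otimes\mathbb{R}_{0,d}$-valued homogeneous polynomials of degree $n$ with $D_hP=0$. $R(P_n)=\{\sum_{j=0}^ma_jx^jP_n(x): m\in\mathbb{N}_0,\ a_j\in\mathbb{C}\}$ (Clifford powers of $x$). $D_+f=D_hf-2xf$, and $H_{s,\mu,P_n}=(D_+)^sP_n$. *)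

theory Defs
  imports "HOL-Analysis.Analysis" "HOL-Library.Function_Algebras"
begin

text \<open>The index type 'd (finite, linearly ordered, CARD('d) = d) labels the generators e_i.
  An element of the complexified Clifford algebra is given by its coordinates with respect to
  the basis blades e_A = e_{a1} ... e_{ak} (A = {a1 < ... < ak}), i.e. a function
  'd set => complex. Addition and zero are pointwise (Function_Algebras).\<close>

type_synonym 'd cliff = "'d set \<Rightarrow> complex"

definition blade_sign :: "'d::{finite,linorder} set \<Rightarrow> 'd set \<Rightarrow> complex" where
  "blade_sign A B = (-1) ^ (card {(i, j). i \<in> A \<and> j \<in> B \<and> j < i} + card (A \<inter> B))"

text \<open>Clifford product: e_A e_B = blade_sign A B e_{A symmetric-difference B};
  this encodes e_i e_j + e_j e_i = -2 delta_ij.\<close>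
definition cmul :: "'d::{finite,linorder} cliff \<Rightarrow> 'd cliff \<Rightarrow> 'd cliff" where
  "cmul a b = (\<lambda>C. \<Sum>A\<in>UNIV. \<Sum>B\<in>UNIV.
       if (A - B) \<union> (B - A) = C then blade_sign A B * a A * b B else 0)"

definition cone :: "'d cliff" where
  "cone = (\<lambda>A. if A = {} then 1 else 0)"

definition cgen :: "'d \<Rightarrow> 'd cliff" where
  "cgen i = (\<lambda>A. if A = {i} then 1 else 0)"

definition cscale :: "complex \<Rightarrow> 'd cliff \<Rightarrow> 'd cliff" where
  "cscale c v = (\<lambda>A. c * v A)"

definition cvec :: "real ^ 'd::{finite,linorder} \<Rightarrow> 'd cliff" where
  "cvec x = (\<Sum>i\<in>UNIV. cscale (complex_of_real (x $ i)) (cgen i))"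

primrec cpow :: "'d::{finite,linorder} cliff \<Rightarrow> nat \<Rightarrow> 'd cliff" where
  "cpow a 0 = cone"
| "cpow a (Suc k) = cmul a (cpow a k)"

definition refl :: "real ^ 'd::finite \<Rightarrow> real ^ 'd \<Rightarrow> real ^ 'd" where
  "refl \<alpha> x = x - (2 * (\<alpha> \<bullet> x) / (\<alpha> \<bullet> \<alpha>)) *\<^sub>R \<alpha>"

definition root_system :: "(real ^ 'd::finite) set \<Rightarrow> bool" where
  "root_system R \<longleftrightarrow> finite R \<and> 0 \<notin> R \<and>
     (\<forall>\<alpha>\<in>R. \<forall>\<beta>\<in>R. refl \<alpha> \<beta> \<in> R) \<and>
     (\<forall>\<alpha>\<in>R. \<forall>c::real. c *\<^sub>R \<alpha> \<in> R \<longleftrightarrow> c = 1 \<or> c = -1)"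

definition positive_subsystem :: "(real ^ 'd::finite) set \<Rightarrow> (real ^ 'd) set \<Rightarrow> bool" where
  "positive_subsystem R Rp \<longleftrightarrow>
     (\<exists>\<beta>. (\<forall>\<alpha>\<in>R. \<alpha> \<bullet> \<beta> \<noteq> 0) \<and> Rp = {\<alpha>\<in>R. \<alpha> \<bullet> \<beta> > 0})"

inductive_set refl_group :: "(real ^ 'd::finite) set \<Rightarrow> (real ^ 'd \<Rightarrow> real ^ 'd) set"
  for R where
  id: "id \<in> refl_group R"
| step: "w \<in> refl_group R \<Longrightarrow> \<alpha> \<in> R \<Longrightarrow> refl \<alpha> \<circ> w \<in> refl_group R"

definition multiplicity :: "(real ^ 'd::finite) set \<Rightarrow> (real ^ 'd \<Rightarrow> real) \<Rightarrow> bool" where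
  "multiplicity R \<kappa> \<longleftrightarrow> (\<forall>\<alpha>\<in>R. \<kappa> \<alpha> \<ge> 0) \<and>
     (\<forall>w\<in>refl_group R. \<forall>\<alpha>\<in>R. \<kappa> (w \<alpha>) = \<kappa> \<alpha>)"

type_synonym 'd cfun = "real ^ 'd \<Rightarrow> 'd cliff"

definition partial :: "'d::finite \<Rightarrow> 'd cfun \<Rightarrow> 'd cfun" where
  "partial i f x = (\<lambda>A. vector_derivative (\<lambda>t. f (x + t *\<^sub>R axis i 1) A) (at 0))"

text \<open>Difference quotient (f(x) - f(sigma_alpha x)) / <alpha,x>, extended to the hyperplane
  <alpha,x> = 0 by continuity (as is implicit in the paper: for polynomials it is a polynomial).\<close>
definition dquot :: "real ^ 'd::finite \<Rightarrow> 'd cfun \<Rightarrow> 'd cfun" where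
  "dquot \<alpha> f x = (\<lambda>A. Lim (at x within {y. \<alpha> \<bullet> y \<noteq> 0})
       (\<lambda>y. (f y A - f (refl \<alpha> y) A) / complex_of_real (\<alpha> \<bullet> y)))"

definition dunkl :: "(real ^ 'd::finite) set \<Rightarrow> (real ^ 'd \<Rightarrow> real) \<Rightarrow> 'd \<Rightarrow> 'd cfun \<Rightarrow> 'd cfun" where
  "dunkl Rp \<kappa> i f x = partial i f x +
     (\<Sum>\<alpha>\<in>Rp. cscale (complex_of_real (\<kappa> \<alpha> * \<alpha> $ i)) (dquot \<alpha> f x))"

definition dunkl_dirac where
  "dunkl_dirac Rp \<kappa> f x = (\<Sum>i\<in>UNIV. cmul (cgen i) (dunkl Rp \<kappa> i f x))"

definition Dplus where
  "Dplus Rp \<kappa> f x = dunkl_dirac Rp \<kappa> f x - cscale 2 (cmul (cvec x) (f x))"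

definition Hpoly where
  "Hpoly Rp \<kappa> s P = (Dplus Rp \<kappa> ^^ s) P"

definition homog_poly :: "nat \<Rightarrow> 'd::finite cfun \<Rightarrow> bool" where
  "homog_poly n f \<longleftrightarrow> (\<exists>c :: ('d \<Rightarrow> nat) \<Rightarrow> 'd cliff.
     \<forall>x. f x = (\<Sum>m\<in>{m. sum m UNIV = n}. cscale (\<Prod>i\<in>UNIV. complex_of_real (x $ i) ^ m i) (c m)))"

definition Mspace where
  "Mspace Rp \<kappa> n = {P. homog_poly n P \<and> dunkl_dirac Rp \<kappa> P = (\<lambda>x. 0)}"

definition Rspace where
  "Rspace P = {f. \<exists>m a. \<forall>x. f x = (\<Sum>j\<le>m. cscale (a j) (cmul (cpow (cvec x) j) (P x)))}"

definition is_basis_seq :: "(nat \<Rightarrow> 'd::finite cfun) \<Rightarrow> 'd cfun set \<Rightarrow> bool" where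
  "is_basis_seq b V \<longleftrightarrow> (\<forall>s. b s \<in> V) \<and>
     (\<forall>m c. (\<forall>x. (\<Sum>s\<le>m. cscale (c s) (b s x)) = 0) \<longrightarrow> (\<forall>s\<le>m. c s = 0)) \<and>
     (\<forall>f\<in>V. \<exists>m c. \<forall>x. f x = (\<Sum>s\<le>m. cscale (c s) (b s x)))"

end

theory Submission
  imports Defs
begin


definition sd :: "'a set \<Rightarrow> 'a set \<Rightarrow> 'a set" where
  "sd A B = (A - B) \<union> (B - A)"

lemma sd_simps[simp]: "sd A (sd A B) = B" "sd (sd A B) B = A" "sd A {} = A" "sd {} A = A" "sd A A = {}"
  by (auto simp: sd_def)
lemma sd_comm: "sd A B = sd B A" by (auto simp: sd_def)
lemma sd_assoc: "sd (sd A B) C = sd A (sd B C)" by (auto simp: sd_def)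
lemma sd_eq_iff: "sd A B = C \<longleftrightarrow> B = sd A C" by (auto simp: sd_def)

lemma sum_fun_apply: "(\<Sum>i\<in>I. F i) x = (\<Sum>i\<in>I. F i x)"
  by (induction I rule: infinite_finite_induct) auto

definition eps :: "'d::linorder \<Rightarrow> 'd \<Rightarrow> complex" where
  "eps i j = (if j \<le> i then -1 else 1)"

lemma prod_pm1_card: "finite S \<Longrightarrow> (\<Prod>p\<in>S. (-1::complex)) = (-1) ^ card S"
  by simp

lemma blade_sign_prod:
  "blade_sign (A::'d::{finite,linorder} set) B = (\<Prod>i\<in>A. \<Prod>j\<in>B. eps i j)"
proof -
  let ?S1 = "{(i, j). i \<in> A \<and> j \<in> B \<and> j < i}"
  let ?S2 = "{(i, j). i \<in> A \<and> j \<in> B \<and> j = i}"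
  have c2: "card ?S2 = card (A \<inter> B)"
  proof -
    have "?S2 = (\<lambda>i. (i,i)) ` (A \<inter> B)" by auto
    moreover have "inj_on (\<lambda>i. (i,i)) (A \<inter> B)" by (auto simp: inj_on_def)
    ultimately show ?thesis by (simp add: card_image)
  qed
  have "card ?S1 + card ?S2 = card (?S1 \<union> ?S2)"
    by (subst card_Un_disjoint) auto
  also have "?S1 \<union> ?S2 = {p \<in> A \<times> B. snd p \<le> fst p}" by auto
  finally have cc: "card ?S1 + card (A \<inter> B) = card {p \<in> A \<times> B. snd p \<le> fst p}" using c2 by simp
  have pr: "(\<Prod>i\<in>A. \<Prod>j\<in>B. eps i j) = (-1) ^ card {p \<in> A \<times> B. snd p \<le> fst p}"
  proof -
  have "(\<Prod>i\<in>A. \<Prod>j\<in>B. eps i j) = (\<Prod>p\<in>A \<times> B. eps (fst p) (snd p))"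
    by (simp add: prod.cartesian_product split_beta)
  also have "\<dots> = (\<Prod>p\<in>{p \<in> A \<times> B. snd p \<le> fst p}. eps (fst p) (snd p))"
    by (rule prod.mono_neutral_right) (auto simp: eps_def)
  also have "\<dots> = (\<Prod>p\<in>{p \<in> A \<times> B. snd p \<le> fst p}. -1)"
    by (rule prod.cong) (auto simp: eps_def)
  also have "\<dots> = (-1) ^ card {p \<in> A \<times> B. snd p \<le> fst p}" by simp
  finally show ?thesis .
  qed
  show ?thesis unfolding blade_sign_def cc pr by (rule refl)
qed

lemma prod_sd:
  assumes "\<And>i. g i * g i = (1::complex)" "finite A" "finite A'"
  shows "prod g (sd A A') = prod g A * prod g A'"
proof -
  have a: "prod g A = prod g (A \<inter> A') * prod g (A - A')"
    using assms(2) by (rule prod.Int_Diff)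
  have b: "prod g A' = prod g (A' \<inter> A) * prod g (A' - A)"
    using assms(3) by (rule prod.Int_Diff)
  have i: "A' \<inter> A = A \<inter> A'" by blast
  have c: "prod g (A \<inter> A') * prod g (A \<inter> A') = 1"
    by (simp add: assms(1) prod.distrib[symmetric])
  have d: "prod g (sd A A') = prod g (A - A') * prod g (A' - A)"
    unfolding sd_def by (rule prod.union_disjoint) (use assms in auto)
  have "prod g A * prod g A' = (prod g (A - A') * prod g (A' - A)) * (prod g (A \<inter> A') * prod g (A \<inter> A'))"
    unfolding a b i by (simp only: mult_ac)
  also have "\<dots> = prod g (A - A') * prod g (A' - A)" unfolding c by simp
  finally show ?thesis using d by simp
qed

lemma eps_sq: "eps i j * eps i j = 1" by (simp add: eps_def)

lemma prod_eps_sq: "(\<Prod>j\<in>B. eps i j) * (\<Prod>j\<in>B. eps i j) = 1"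
  by (simp add: prod.distrib[symmetric] eps_sq)
lemma prod_eps_sq2: "(\<Prod>i\<in>B. eps i j) * (\<Prod>i\<in>B. eps i j) = 1"
  by (simp add: prod.distrib[symmetric] eps_sq)

lemma bs_sd_left: "blade_sign (sd (A::'d::{finite,linorder} set) A') B = blade_sign A B * blade_sign A' B"
  unfolding blade_sign_prod by (rule prod_sd) (auto simp: prod_eps_sq)

lemma bs_sd_right: "blade_sign (A::'d::{finite,linorder} set) (sd B B') = blade_sign A B * blade_sign A B'"
  unfolding blade_sign_prod
  by (subst prod_sd) (auto simp: prod_eps_sq2 prod.distrib eps_sq)

lemma bs_sq: "blade_sign (A::'d::{finite,linorder} set) B * blade_sign A B = 1"
  unfolding blade_sign_prod by (simp add: prod.distrib[symmetric] eps_sq)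

lemma cmul_alt: "cmul a b C = (\<Sum>A\<in>UNIV. blade_sign A (sd A C) * a A * b (sd A C))"
  unfolding cmul_def
proof (rule sum.cong[OF refl])
  fix A
  have "(\<Sum>B\<in>UNIV. if (A - B) \<union> (B - A) = C then blade_sign A B * a A * b B else 0)
      = (\<Sum>B\<in>UNIV. if B = sd A C then blade_sign A B * a A * b B else 0)"
    by (rule sum.cong) (auto simp: sd_eq_iff[symmetric] sd_def)
  also have "\<dots> = blade_sign A (sd A C) * a A * b (sd A C)" by (simp add: sum.delta)
  finally show "(\<Sum>B\<in>UNIV. if (A - B) \<union> (B - A) = C then blade_sign A B * a A * b B else 0) = \<dots>" .
qed

lemma cmul_assoc: "cmul (cmul a b) c = cmul a (cmul b (c::'d::{finite,linorder} cliff))"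
proof (rule ext)
  fix C
  have "cmul (cmul a b) c C = (\<Sum>X\<in>UNIV. blade_sign X (sd X C) * (\<Sum>A\<in>UNIV. blade_sign A (sd A X) * a A * b (sd A X)) * c (sd X C))"
    by (simp only: cmul_alt)
  also have "\<dots> = (\<Sum>X\<in>UNIV. \<Sum>A\<in>UNIV. blade_sign X (sd X C) * (blade_sign A (sd A X) * a A * b (sd A X)) * c (sd X C))"
    by (simp only: sum_distrib_left sum_distrib_right)
  also have "\<dots> = (\<Sum>A\<in>UNIV. \<Sum>X\<in>UNIV. blade_sign X (sd X C) * (blade_sign A (sd A X) * a A * b (sd A X)) * c (sd X C))"
    by (rule sum.swap)
  also have "\<dots> = (\<Sum>A\<in>UNIV. \<Sum>B\<in>UNIV. blade_sign (sd A B) (sd (sd A B) C) * (blade_sign A B * a A * b B) * c (sd (sd A B) C))"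
  proof (rule sum.cong[OF refl])
    fix A
    show "(\<Sum>X\<in>UNIV. blade_sign X (sd X C) * (blade_sign A (sd A X) * a A * b (sd A X)) * c (sd X C)) =
          (\<Sum>B\<in>UNIV. blade_sign (sd A B) (sd (sd A B) C) * (blade_sign A B * a A * b B) * c (sd (sd A B) C))"
      by (rule sum.reindex_bij_witness[of _ "sd A" "sd A"]) auto
  qed
  also have "\<dots> = (\<Sum>A\<in>UNIV. \<Sum>B\<in>UNIV. blade_sign A (sd A C) * (blade_sign B (sd B (sd A C)) * a A * b B * c (sd B (sd A C))))"
  proof (intro sum.cong refl)
    fix A B :: "'d set"
    have e1: "sd (sd A B) C = sd B (sd A C)" by (auto simp: sd_def)
    have "blade_sign (sd A B) (sd B (sd A C)) * blade_sign A B = blade_sign A (sd A C) * blade_sign B (sd B (sd A C))"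
    proof -
      have "blade_sign (sd A B) (sd B (sd A C)) * blade_sign A B =
          blade_sign A (sd B (sd A C)) * blade_sign B (sd B (sd A C)) * blade_sign A B"
        by (simp add: bs_sd_left)
      also have "\<dots> = blade_sign A (sd B (sd A C)) * blade_sign A B * blade_sign B (sd B (sd A C))" by simp
      also have "blade_sign A (sd B (sd A C)) * blade_sign A B = blade_sign A (sd A C)"
      proof -
        have "sd (sd B (sd A C)) B = sd A C" by (auto simp: sd_def)
        then show ?thesis using bs_sd_right[of A "sd B (sd A C)" B] by simp
      qed
      finally show ?thesis .
    qed
    then show "blade_sign (sd A B) (sd (sd A B) C) * (blade_sign A B * a A * b B) * c (sd (sd A B) C) =
        blade_sign A (sd A C) * (blade_sign B (sd B (sd A C)) * a A * b B * c (sd B (sd A C)))"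
    proof -
      let ?L = "blade_sign (sd A B) (sd B (sd A C)) * blade_sign A B"
      let ?R = "blade_sign A (sd A C) * blade_sign B (sd B (sd A C))"
      have "blade_sign (sd A B) (sd (sd A B) C) * (blade_sign A B * a A * b B) * c (sd (sd A B) C)
          = ?L * (a A * b B * c (sd B (sd A C)))" unfolding e1 by (simp only: mult_ac)
      also have "\<dots> = ?R * (a A * b B * c (sd B (sd A C)))" using \<open>?L = ?R\<close> by simp
      also have "\<dots> = blade_sign A (sd A C) * (blade_sign B (sd B (sd A C)) * a A * b B * c (sd B (sd A C)))"
        by (simp only: mult_ac)
      finally show ?thesis .
    qed
  qed
  also have "\<dots> = (\<Sum>A\<in>UNIV. \<Sum>B\<in>UNIV. blade_sign A (sd A C) * a A * (blade_sign B (sd B (sd A C)) * b B * c (sd B (sd A C))))"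
    by (intro sum.cong refl) (simp only: mult_ac)
  also have "\<dots> = cmul a (cmul b c) C"
    by (simp only: cmul_alt sum_distrib_left)
  finally show "cmul (cmul a b) c C = cmul a (cmul b c) C" .
qed


definition bas :: "'d set \<Rightarrow> 'd cliff" where
  "bas A = (\<lambda>C. if C = A then 1 else 0)"

lemma cone_bas: "cone = bas {}" by (simp add: cone_def bas_def)
lemma cgen_bas: "cgen i = bas {i}" by (simp add: cgen_def bas_def)

lemma cscale_apply[simp]: "cscale c v A = c * v A" by (simp add: cscale_def)
lemma cscale_add: "cscale c (a + b) = cscale c a + cscale c b" by (rule ext) (simp add: algebra_simps)
lemma cscale_add_left: "cscale (c + d) a = cscale c a + cscale d a" by (rule ext) (simp add: algebra_simps)
lemma cscale_minus: "cscale c (a - b) = cscale c a - cscale c b" by (rule ext) (simp add: algebra_simps)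
lemma cscale_uminus: "cscale c (- a) = - cscale c a" by (rule ext) (simp add: algebra_simps)
lemma cscale_uminus_left: "cscale (- c) a = - cscale c a" by (rule ext) (simp add: algebra_simps)
lemma cscale_cscale[simp]: "cscale c (cscale d a) = cscale (c * d) a" by (rule ext) (simp add: algebra_simps)
lemma cscale_one[simp]: "cscale 1 a = a" by (rule ext) simp
lemma cscale_zero[simp]: "cscale 0 a = 0" "cscale c 0 = 0" by (rule ext, simp)+
lemma cscale_sum: "cscale c (\<Sum>i\<in>I. F i) = (\<Sum>i\<in>I. cscale c (F i))"
  by (rule ext) (simp add: sum_fun_apply sum_distrib_left)
lemma cscale_sum_left: "cscale (\<Sum>i\<in>I. f i) a = (\<Sum>i\<in>I. cscale (f i) a)"
  by (rule ext) (simp add: sum_fun_apply sum_distrib_right)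

lemma bs_empty[simp]: "blade_sign {} B = 1" "blade_sign A {} = 1"
  by (simp_all add: blade_sign_prod)

lemma cmul_add_left: "cmul (a + b) c = cmul a c + cmul b (c::'d::{finite,linorder} cliff)"
  by (rule ext) (simp add: cmul_alt algebra_simps sum.distrib)
lemma cmul_add_right: "cmul a (b + c) = cmul a b + cmul a (c::'d::{finite,linorder} cliff)"
  by (rule ext) (simp add: cmul_alt algebra_simps sum.distrib)
lemma cmul_diff_left: "cmul (a - b) c = cmul a c - cmul b (c::'d::{finite,linorder} cliff)"
  by (rule ext) (simp add: cmul_alt algebra_simps sum_subtractf)
lemma cmul_diff_right: "cmul a (b - c) = cmul a b - cmul a (c::'d::{finite,linorder} cliff)"
  by (rule ext) (simp add: cmul_alt algebra_simps sum_subtractf)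
lemma cmul_uminus_left: "cmul (- a) c = - cmul a (c::'d::{finite,linorder} cliff)"
  by (rule ext) (simp add: cmul_alt sum_negf)
lemma cmul_uminus_right: "cmul a (- c) = - cmul a (c::'d::{finite,linorder} cliff)"
  by (rule ext) (simp add: cmul_alt sum_negf)
lemma cmul_scale_left: "cmul (cscale z a) c = cscale z (cmul a (c::'d::{finite,linorder} cliff))"
  by (rule ext) (simp add: cmul_alt sum_distrib_left mult_ac)
lemma cmul_scale_right: "cmul a (cscale z c) = cscale z (cmul a (c::'d::{finite,linorder} cliff))"
  by (rule ext) (simp add: cmul_alt sum_distrib_left mult_ac)
lemma cmul_zero[simp]: "cmul 0 c = 0" "cmul c 0 = (0::'d::{finite,linorder} cliff)"
  by (rule ext, simp add: cmul_alt)+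
lemma cmul_sum_left: "cmul (\<Sum>i\<in>I. F i) c = (\<Sum>i\<in>I. cmul (F i) (c::'d::{finite,linorder} cliff))"
proof (induction I rule: infinite_finite_induct)
  case (infinite A) then show ?case by (simp only: sum.infinite[OF infinite] cmul_zero)
next
  case empty then show ?case by (simp only: sum.empty cmul_zero)
next
  case (insert x F) then show ?case by (simp only: sum.insert[OF insert(1,2)] cmul_add_left insert(3))
qed
lemma cmul_sum_right: "cmul c (\<Sum>i\<in>I. F i) = (\<Sum>i\<in>I. cmul c (F i::'d::{finite,linorder} cliff))"
proof (induction I rule: infinite_finite_induct)
  case (infinite A) then show ?case by (simp only: sum.infinite[OF infinite] cmul_zero)
next
  case empty then show ?case by (simp only: sum.empty cmul_zero)
next
  case (insert x F) then show ?case by (simp only: sum.insert[OF insert(1,2)] cmul_add_right insert(3))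
qed

lemma cmul_bas: "cmul (bas A) (bas B) = cscale (blade_sign A B) (bas (sd A (B::'d::{finite,linorder} set)))"
proof (rule ext)
  fix C
  have "cmul (bas A) (bas B) C = (\<Sum>X\<in>UNIV. if X = A then blade_sign X (sd X C) * bas B (sd X C) else 0)"
    unfolding cmul_alt by (rule sum.cong) (auto simp: bas_def)
  also have "\<dots> = blade_sign A (sd A C) * bas B (sd A C)" by simp
  also have "\<dots> = cscale (blade_sign A B) (bas (sd A B)) C"
    by (auto simp: bas_def sd_eq_iff)
  finally show "cmul (bas A) (bas B) C = cscale (blade_sign A B) (bas (sd A B)) C" .
qed

lemma cmul_one_left[simp]: "cmul cone a = (a::'d::{finite,linorder} cliff)"
proof (rule ext)
  fix C
  have "cmul cone a C = (\<Sum>X\<in>UNIV. if X = {} then blade_sign X (sd X C) * a (sd X C) else 0)"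
    unfolding cmul_alt by (rule sum.cong) (auto simp: cone_def)
  then show "cmul cone a C = a C" by simp
qed

lemma cmul_one_right[simp]: "cmul a cone = (a::'d::{finite,linorder} cliff)"
proof (rule ext)
  fix C
  have "cmul a cone C = (\<Sum>X\<in>UNIV. if X = C then blade_sign X (sd X C) * a X else 0)"
    unfolding cmul_alt by (rule sum.cong) (auto simp: cone_def sd_def)
  then show "cmul a cone C = a C" by simp
qed

lemma bs_single: "blade_sign {i} {j} = eps (i::'d::{finite,linorder}) j"
  by (simp add: blade_sign_prod)

lemma cgen_anti: "cmul (cgen i) (cgen j) + cmul (cgen j) (cgen i) =
   cscale (if i = j then -2 else 0) (cone::'d::{finite,linorder} cliff)"
proof (cases "i = j")
  case True
  then show ?thesis
    by (rule_tac ext) (simp add: cgen_bas cone_bas cmul_bas bs_single eps_def)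
next
  case False
  have "sd {i} {j} = sd {j} {i}" by (rule sd_comm)
  moreover have "eps i j + eps j i = 0" using False by (auto simp: eps_def)
  ultimately show ?thesis using False
    by (rule_tac ext) (simp add: cgen_bas cmul_bas bs_single distrib_right[symmetric])
qed

lemma cgen_sq: "cmul (cgen i) (cgen i) = cscale (-1) (cone::'d::{finite,linorder} cliff)"
proof (rule ext)
  fix A
  show "cmul (cgen i) (cgen i) A = cscale (-1) (cone::'d::{finite,linorder} cliff) A"
    using fun_cong[OF cgen_anti[of i i], of A] by simp
qed

lemma cvec_apply: "cvec x = (\<Sum>i\<in>UNIV. cscale (complex_of_real (x $ i)) (cgen i))"
  by (simp add: cvec_def)

lemma cgen_cvec_anti: "cmul (cgen i) (cvec x) + cmul (cvec x) (cgen i) =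
   cscale (- 2 * complex_of_real (x $ i)) (cone::'d::{finite,linorder} cliff)"
proof -
  have "cmul (cgen i) (cvec x) + cmul (cvec x) (cgen i) =
    (\<Sum>j\<in>UNIV. cscale (complex_of_real (x $ j)) (cmul (cgen i) (cgen j) + cmul (cgen j) (cgen i)))"
    unfolding cvec_apply cmul_sum_left cmul_sum_right cmul_scale_left cmul_scale_right
    by (simp add: sum.distrib cscale_add)
  also have "\<dots> = (\<Sum>j\<in>UNIV. if j = i then cscale (- 2 * complex_of_real (x $ i)) cone else 0)"
    apply (rule sum.cong[OF refl])
    subgoal for j by (cases "j = i") (simp_all add: cgen_anti mult.commute)
    done
  also have "\<dots> = cscale (- 2 * complex_of_real (x $ i)) cone" by simp
  finally show ?thesis .
qed

lemma dbl_cancel: "(a::complex) + a = (- 2 * c) * b \<Longrightarrow> a = (- c) * b"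
  by (simp add: algebra_simps)

lemma cvec_sq: "cmul (cvec x) (cvec x) = cscale (- complex_of_real (x \<bullet> x)) (cone::'d::{finite,linorder} cliff)"
proof -
  let ?X = "cvec x :: 'd cliff"
  let ?S = "cmul ?X ?X"
  have S1: "?S = (\<Sum>i\<in>UNIV. cscale (complex_of_real (x $ i)) (cmul (cgen i) ?X))"
    by (subst (1) cvec_apply) (simp only: cmul_sum_left cmul_scale_left)
  have S2: "?S = (\<Sum>i\<in>UNIV. cscale (complex_of_real (x $ i)) (cmul ?X (cgen i)))"
    by (subst (2) cvec_apply) (simp only: cmul_sum_right cmul_scale_right)
  have "?S + ?S = (\<Sum>i\<in>UNIV. cscale (complex_of_real (x $ i)) (cmul (cgen i) ?X + cmul ?X (cgen i)))"
    by (subst (1) S1, subst S2) (simp only: sum.distrib[symmetric] cscale_add)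
  also have "\<dots> = (\<Sum>i\<in>UNIV. cscale (- 2 * (complex_of_real (x $ i) * complex_of_real (x $ i))) cone)"
    by (simp only: cgen_cvec_anti cscale_cscale mult_ac)
  also have "\<dots> = cscale (- 2 * complex_of_real (x \<bullet> x)) cone"
  proof -
    have "(\<Sum>i\<in>UNIV. - 2 * (complex_of_real (x $ i) * complex_of_real (x $ i))) = - 2 * complex_of_real (x \<bullet> x)"
      by (simp add: inner_vec_def sum_distrib_left)
    then show ?thesis by (simp only: cscale_sum_left[symmetric])
  qed
  finally have SS: "?S + ?S = cscale (- 2 * complex_of_real (x \<bullet> x)) cone" .
  then show ?thesis
  proof (intro ext)
    fix A show "?S A = cscale (- complex_of_real (x \<bullet> x)) cone A"
    proof -
      have "?S A + ?S A = (- 2 * complex_of_real (x \<bullet> x)) * cone A"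
        using fun_cong[OF SS, of A] by (simp only: plus_fun_apply cscale_apply)
      from dbl_cancel[OF this] show ?thesis by (simp only: cscale_apply)
    qed
  qed
qed


inductive cpoly :: "((real, 'd::finite) vec \<Rightarrow> complex) \<Rightarrow> bool" where
  cp_const: "cpoly (\<lambda>y. c)"
| cp_coord: "cpoly (\<lambda>y. complex_of_real (y $ k))"
| cp_add: "cpoly f \<Longrightarrow> cpoly g \<Longrightarrow> cpoly (\<lambda>y. f y + g y)"
| cp_mult: "cpoly f \<Longrightarrow> cpoly g \<Longrightarrow> cpoly (\<lambda>y. f y * g y)"

lemma cp_sum: "(\<And>i. i \<in> I \<Longrightarrow> cpoly (F i)) \<Longrightarrow> cpoly (\<lambda>y. \<Sum>i\<in>I. F i y)"
proof (induction I rule: infinite_finite_induct)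
  case (infinite A) then show ?case using cp_const[of 0] by simp
next
  case empty then show ?case using cp_const[of 0] by simp
next
  case (insert x F) then show ?case by (simp add: cp_add)
qed

lemma cp_prod: "(\<And>i. i \<in> I \<Longrightarrow> cpoly (F i)) \<Longrightarrow> cpoly (\<lambda>y. \<Prod>i\<in>I. F i y)"
proof (induction I rule: infinite_finite_induct)
  case (infinite A) then show ?case using cp_const[of 1] by simp
next
  case empty then show ?case using cp_const[of 1] by simp
next
  case (insert x F) then show ?case by (simp add: cp_mult)
qed

lemma cp_pow: "cpoly f \<Longrightarrow> cpoly (\<lambda>y. f y ^ n)"
proof (induction n)
  case 0 then show ?case using cp_const[of 1] by simp
next
  case (Suc n) then show ?case using cp_mult[OF Suc(2) Suc(1)[OF Suc(2)]] by simp
qed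

lemma cp_cmult: "cpoly f \<Longrightarrow> cpoly (\<lambda>y. c * f y)"
  using cp_mult[OF cp_const] .

lemma cp_deriv: "cpoly f \<Longrightarrow> \<exists>f'. \<forall>x. (f has_derivative f' x) (at x)"
proof (induction rule: cpoly.induct)
  case (cp_const c)
  then show ?case by (intro exI[of _ "\<lambda>x h. 0"]) simp
next
  case (cp_coord k)
  have "bounded_linear (\<lambda>y::(real,'a) vec. complex_of_real (y $ k))"
    by (rule bounded_linear_compose[OF bounded_linear_of_real bounded_linear_vec_nth])
  then show ?case by (intro exI[of _ "\<lambda>x h. complex_of_real (h $ k)"]) (simp add: bounded_linear_imp_has_derivative)
next
  case (cp_add f g)
  then obtain f' g' where "\<forall>x. (f has_derivative f' x) (at x)" "\<forall>x. (g has_derivative g' x) (at x)" by blast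
  then show ?case by (intro exI[of _ "\<lambda>x h. f' x h + g' x h"]) (auto intro: has_derivative_add)
next
  case (cp_mult f g)
  then obtain f' g' where "\<forall>x. (f has_derivative f' x) (at x)" "\<forall>x. (g has_derivative g' x) (at x)" by blast
  then show ?case by (intro exI[of _ "\<lambda>x h. f x * g' x h + f' x h * g x"]) (auto intro: has_derivative_mult)
qed

lemma cp_cont: "cpoly f \<Longrightarrow> isCont f x"
  using cp_deriv has_derivative_continuous by blast

lemma refl_alt: "refl \<alpha> = (\<lambda>x. x - (\<alpha> \<bullet> x) *\<^sub>R ((2 / (\<alpha> \<bullet> \<alpha>)) *\<^sub>R \<alpha>))"
  by (rule ext) (simp add: refl_def)

lemma refl_cont: "isCont (refl \<alpha>) x"
  unfolding refl_alt by (intro continuous_intros)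

lemma refl_nth: "refl \<alpha> y $ k = y $ k - (2 * (\<alpha> \<bullet> y) / (\<alpha> \<bullet> \<alpha>)) * \<alpha> $ k"
  by (simp add: refl_def)

lemma cp_quot: "cpoly f \<Longrightarrow> \<exists>Q. (\<forall>x. isCont Q x) \<and> (\<forall>y. f y - f (refl \<alpha> y) = complex_of_real (\<alpha> \<bullet> y) * Q y)"
proof (induction rule: cpoly.induct)
  case (cp_const c)
  then show ?case by (intro exI[of _ "\<lambda>y. 0"]) simp
next
  case (cp_coord k)
  show ?case
  proof (intro exI[of _ "\<lambda>y. complex_of_real (2 * \<alpha> $ k / (\<alpha> \<bullet> \<alpha>))"] conjI allI)
    fix y
    show "complex_of_real (y $ k) - complex_of_real (refl \<alpha> y $ k) =
      complex_of_real (\<alpha> \<bullet> y) * complex_of_real (2 * \<alpha> $ k / (\<alpha> \<bullet> \<alpha>))"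
      unfolding refl_nth of_real_mult[symmetric] of_real_diff[symmetric] by simp
  qed simp
next
  case (cp_add f g)
  then obtain Qf Qg where f: "(\<forall>x. isCont Qf x) \<and> (\<forall>y. f y - f (refl \<alpha> y) = complex_of_real (\<alpha> \<bullet> y) * Qf y)"
    and g: "(\<forall>x. isCont Qg x) \<and> (\<forall>y. g y - g (refl \<alpha> y) = complex_of_real (\<alpha> \<bullet> y) * Qg y)" by blast
  show ?case
  proof (intro exI[of _ "\<lambda>y. Qf y + Qg y"] conjI allI)
    fix x show "isCont (\<lambda>y. Qf y + Qg y) x" using f g by (intro continuous_intros) auto
  next
    fix y
    have "f y + g y - (f (refl \<alpha> y) + g (refl \<alpha> y)) = (f y - f (refl \<alpha> y)) + (g y - g (refl \<alpha> y))"
      by (simp add: algebra_simps)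
    also have "\<dots> = complex_of_real (\<alpha> \<bullet> y) * Qf y + complex_of_real (\<alpha> \<bullet> y) * Qg y"
      using f g by simp
    finally show "f y + g y - (f (refl \<alpha> y) + g (refl \<alpha> y)) = complex_of_real (\<alpha> \<bullet> y) * (Qf y + Qg y)"
      by (simp add: distrib_left)
  qed
next
  case (cp_mult f g)
  then obtain Qf Qg where f: "(\<forall>x. isCont Qf x) \<and> (\<forall>y. f y - f (refl \<alpha> y) = complex_of_real (\<alpha> \<bullet> y) * Qf y)"
    and g: "(\<forall>x. isCont Qg x) \<and> (\<forall>y. g y - g (refl \<alpha> y) = complex_of_real (\<alpha> \<bullet> y) * Qg y)" by blast
  show ?case
  proof (intro exI[of _ "\<lambda>y. f y * Qg y + Qf y * g (refl \<alpha> y)"] conjI allI)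
    fix x
    have "isCont (\<lambda>y. g (refl \<alpha> y)) x"
      using continuous_at_compose[OF refl_cont cp_cont[OF cp_mult(2)]] by (simp add: o_def)
    then show "isCont (\<lambda>y. f y * Qg y + Qf y * g (refl \<alpha> y)) x"
      using f g cp_cont[OF cp_mult(1)] by (intro continuous_intros) auto
  next
    fix y
    have "f y * g y - f (refl \<alpha> y) * g (refl \<alpha> y) = f y * (g y - g (refl \<alpha> y)) + (f y - f (refl \<alpha> y)) * g (refl \<alpha> y)"
      by (simp add: algebra_simps)
    also have "\<dots> = f y * (complex_of_real (\<alpha> \<bullet> y) * Qg y) + (complex_of_real (\<alpha> \<bullet> y) * Qf y) * g (refl \<alpha> y)"
      using f g by simp
    finally show "f y * g y - f (refl \<alpha> y) * g (refl \<alpha> y) = complex_of_real (\<alpha> \<bullet> y) * (f y * Qg y + Qf y * g (refl \<alpha> y))"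
      by (simp add: algebra_simps)
  qed
qed

lemma nontriv_hyper:
  assumes "\<alpha> \<noteq> 0"
  shows "\<not> trivial_limit (at (x::(real,'d::finite) vec) within {y. \<alpha> \<bullet> y \<noteq> 0})"
proof -
  have "\<forall>e>0. \<exists>x'\<in>{y. \<alpha> \<bullet> y \<noteq> 0}. x' \<noteq> x \<and> dist x' x < e"
  proof (intro allI impI)
  fix e :: real assume e: "e > 0"
  have na: "norm \<alpha> > 0" using assms by simp
  have aa: "\<alpha> \<bullet> \<alpha> > 0" using assms by simp
  define t where "t = e / (2 * norm \<alpha>)"
  have t: "t > 0" using e na by (simp add: t_def)
  have pt: "\<And>s. 0 < s \<Longrightarrow> s \<le> t \<Longrightarrow> x + s *\<^sub>R \<alpha> \<noteq> x \<and> dist (x + s *\<^sub>R \<alpha>) x < e"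
  proof -
    fix s :: real assume s: "0 < s" "s \<le> t"
    have "dist (x + s *\<^sub>R \<alpha>) x = s * norm \<alpha>" using s by (simp add: dist_norm)
    also have "\<dots> \<le> t * norm \<alpha>" using s na by simp
    also have "\<dots> < e" using e na by (simp add: t_def)
    finally show "x + s *\<^sub>R \<alpha> \<noteq> x \<and> dist (x + s *\<^sub>R \<alpha>) x < e" using s assms by simp
  qed
  show "\<exists>x'\<in>{y. \<alpha> \<bullet> y \<noteq> 0}. x' \<noteq> x \<and> dist x' x < e"
  proof (cases "\<alpha> \<bullet> (x + t *\<^sub>R \<alpha>) = 0")
    case False
    then show ?thesis using pt[of t] t by auto
  next
    case True
    have "\<alpha> \<bullet> (x + (t/2) *\<^sub>R \<alpha>) \<noteq> 0"
    proof
      assume "\<alpha> \<bullet> (x + (t/2) *\<^sub>R \<alpha>) = 0"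
      then have h2: "\<alpha> \<bullet> x + (t/2) * (\<alpha> \<bullet> \<alpha>) = 0" by (simp add: inner_add_right)
      have h1: "\<alpha> \<bullet> x + t * (\<alpha> \<bullet> \<alpha>) = 0" using True by (simp add: inner_add_right)
      have h3: "t * (\<alpha> \<bullet> \<alpha>) = 2 * ((t/2) * (\<alpha> \<bullet> \<alpha>))" by simp
      have h4: "(t/2) * (\<alpha> \<bullet> \<alpha>) > 0" using t aa by simp
      show False using h1 h2 h3 h4 by linarith
    qed
    then show ?thesis using pt[of "t/2"] t by auto
  qed
  qed
  then show ?thesis unfolding trivial_limit_within islimpt_approachable by simp
qed


definition cgood :: "'d::finite cfun \<Rightarrow> bool" where
  "cgood F \<longleftrightarrow> (\<forall>A. cpoly (\<lambda>y. F y A))"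

lemma cgood_const: "cgood (\<lambda>y. a)"
  unfolding cgood_def by (simp add: cp_const)

lemma cgood_add: "cgood F \<Longrightarrow> cgood G \<Longrightarrow> cgood (\<lambda>y. F y + G y)"
  unfolding cgood_def by (simp add: cp_add)

lemma cgood_sum: "(\<And>k. k \<in> K \<Longrightarrow> cgood (G k)) \<Longrightarrow> cgood (\<lambda>y. \<Sum>k\<in>K. G k y)"
  unfolding cgood_def by (simp add: sum_fun_apply cp_sum)

lemma cgood_scale: "cgood F \<Longrightarrow> cgood (\<lambda>y. cscale c (F y))"
  unfolding cgood_def by (simp add: cp_cmult)

lemma cgood_cmul: "cgood F \<Longrightarrow> cgood G \<Longrightarrow> cgood (\<lambda>y. cmul (F y) (G y :: 'd::{finite,linorder} cliff))"
  unfolding cgood_def cmul_alt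
  by (intro allI cp_sum cp_mult cp_cmult) auto

lemma cgood_cvec: "cgood (\<lambda>y. cvec y :: 'd::{finite,linorder} cliff)"
  unfolding cgood_def cvec_apply sum_fun_apply cscale_apply
  by (intro allI cp_sum cp_mult cp_coord cp_const)

lemma cgood_cpow: "cgood (\<lambda>y. cpow (cvec y) k :: 'd::{finite,linorder} cliff)"
proof (induction k)
  case 0 then show ?case by (simp add: cgood_const)
next
  case (Suc k) then show ?case by (simp add: cgood_cmul cgood_cvec)
qed

lemma cgood_coord: "cgood G \<Longrightarrow> cgood (\<lambda>y. cscale (complex_of_real (y $ j)) (G y))"
  unfolding cgood_def by (simp add: cp_mult cp_coord)

lemma cgood_cont: "cgood G \<Longrightarrow> isCont (\<lambda>y. G y A) x"
  unfolding cgood_def using cp_cont by blast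

lemma partial_hvd:
  assumes "cgood F"
  shows "((\<lambda>t. F (x + t *\<^sub>R axis i 1) A) has_vector_derivative partial i F x A) (at 0)"
proof -
  obtain f' where f': "\<forall>x. ((\<lambda>y. F y A) has_derivative f' x) (at x)"
    using cp_deriv assms unfolding cgood_def by blast
  have d1: "(\<lambda>t::real. x + t *\<^sub>R axis i 1) differentiable (at 0)"
    by (rule differentiableI) (rule derivative_eq_intros | simp)+
  have d2: "(\<lambda>y. F y A) differentiable (at ((\<lambda>t::real. x + t *\<^sub>R axis i 1) 0))"
    using f' by (auto intro: differentiableI)
  have "((\<lambda>y. F y A) \<circ> (\<lambda>t::real. x + t *\<^sub>R axis i 1)) differentiable (at 0)"
    by (rule differentiable_chain_at[OF d1 d2])
  then have "(\<lambda>t. F (x + t *\<^sub>R axis i 1) A) differentiable (at 0)" by (simp add: o_def)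
  then show ?thesis unfolding partial_def vector_derivative_works by simp
qed

lemma partial_unique:
  "((\<lambda>t. F (x + t *\<^sub>R axis i 1) A) has_vector_derivative D) (at 0) \<Longrightarrow> partial i F x A = D"
  unfolding partial_def by (simp add: vector_derivative_at)

lemma partial_sum:
  assumes "\<And>k. k \<in> K \<Longrightarrow> cgood (G k)"
  shows "partial i (\<lambda>y. \<Sum>k\<in>K. G k y) x = (\<Sum>k\<in>K. partial i (G k) x)"
proof (rule ext)
  fix A
  have "((\<lambda>t. \<Sum>k\<in>K. G k (x + t *\<^sub>R axis i 1) A) has_vector_derivative (\<Sum>k\<in>K. partial i (G k) x A)) (at 0)"
    by (rule has_vector_derivative_sum) (rule partial_hvd[OF assms])
  then show "partial i (\<lambda>y. \<Sum>k\<in>K. G k y) x A = (\<Sum>k\<in>K. partial i (G k) x) A"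
    by (intro partial_unique) (simp add: sum_fun_apply)
qed

lemma hvd_cmult: "(g has_vector_derivative g') F \<Longrightarrow> ((\<lambda>t. c * g t) has_vector_derivative c * g') F"
  for g :: "real \<Rightarrow> complex"
  by (rule bounded_linear.has_vector_derivative[OF bounded_linear_mult_right])

lemma partial_scale:
  assumes "cgood G"
  shows "partial i (\<lambda>y. cscale c (G y)) x = cscale c (partial i G x)"
proof (rule ext)
  fix A
  show "partial i (\<lambda>y. cscale c (G y)) x A = cscale c (partial i G x) A"
    by (intro partial_unique) (simp add: hvd_cmult partial_hvd[OF assms])
qed

lemma partial_cmul:
  assumes "cgood G"
  shows "partial i (\<lambda>y. cmul a (G y)) x = cmul a (partial i G x :: 'd::{finite,linorder} cliff)"
proof (rule ext)
  fix C
  have "((\<lambda>t. \<Sum>X\<in>UNIV. blade_sign X (sd X C) * a X * G (x + t *\<^sub>R axis i 1) (sd X C)) has_vector_derivative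
     (\<Sum>X\<in>UNIV. blade_sign X (sd X C) * a X * partial i G x (sd X C))) (at 0)"
    by (intro has_vector_derivative_sum hvd_cmult partial_hvd[OF assms])
  then show "partial i (\<lambda>y. cmul a (G y)) x C = cmul a (partial i G x) C"
    by (intro partial_unique) (simp add: cmul_alt)
qed

lemma partial_coord:
  assumes "cgood G"
  shows "partial i (\<lambda>y. cscale (complex_of_real (y $ j)) (G y)) x =
    cscale (if i = j then 1 else 0) (G x) + cscale (complex_of_real (x $ j)) (partial i G x)"
proof (rule ext)
  fix A
  have r: "((\<lambda>t. x $ j + t * (if i = j then 1 else 0)) has_field_derivative (if i = j then 1 else 0)) (at (0::real))"
    by (rule derivative_eq_intros | simp)+
  have "((\<lambda>t. complex_of_real (x $ j + t * (if i = j then 1 else 0)) * G (x + t *\<^sub>R axis i 1) A) has_vector_derivative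
     (complex_of_real (x $ j + 0 * (if i = j then 1 else 0)) * partial i G x A + complex_of_real (if i = j then 1 else 0) * G (x + 0 *\<^sub>R axis i 1) A)) (at 0)"
    by (rule has_vector_derivative_mult[OF has_vector_derivative_of_real[OF r] partial_hvd[OF assms]])
  then show "partial i (\<lambda>y. cscale (complex_of_real (y $ j)) (G y)) x A =
    (cscale (if i = j then 1 else 0) (G x) + cscale (complex_of_real (x $ j)) (partial i G x)) A"
    by (intro partial_unique) (auto simp: axis_def algebra_simps)
qed


definition qt :: "(real,'d::finite) vec \<Rightarrow> 'd cfun \<Rightarrow> 'd set \<Rightarrow> (real,'d) vec \<Rightarrow> complex" where
  "qt \<alpha> F A y = (F y A - F (refl \<alpha> y) A) / complex_of_real (\<alpha> \<bullet> y)"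

lemma dquot_qt: "dquot \<alpha> F x A = Lim (at x within {y. \<alpha> \<bullet> y \<noteq> 0}) (qt \<alpha> F A)"
  unfolding dquot_def qt_def by simp

lemma dquot_tendsto:
  assumes "cgood F" "\<alpha> \<noteq> 0"
  shows "(qt \<alpha> F A \<longlongrightarrow> dquot \<alpha> F x A) (at x within {y. \<alpha> \<bullet> y \<noteq> 0})"
proof -
  obtain Q where Q: "\<forall>x. isCont Q x" "\<forall>y. F y A - F (refl \<alpha> y) A = complex_of_real (\<alpha> \<bullet> y) * Q y"
    using cp_quot[of "\<lambda>y. F y A" \<alpha>] assms unfolding cgood_def by blast
  have ev: "eventually (\<lambda>y. qt \<alpha> F A y = Q y) (at x within {y. \<alpha> \<bullet> y \<noteq> 0})"
    unfolding eventually_at_filter by (rule always_eventually) (auto simp: qt_def Q(2))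
  have "(Q \<longlongrightarrow> Q x) (at x within {y. \<alpha> \<bullet> y \<noteq> 0})"
    using isCont_tendsto_compose[OF Q(1)[rule_format] tendsto_ident_at] by simp
  then have t: "(qt \<alpha> F A \<longlongrightarrow> Q x) (at x within {y. \<alpha> \<bullet> y \<noteq> 0})"
    using tendsto_cong[OF ev] by simp
  have "dquot \<alpha> F x A = Q x"
    unfolding dquot_qt by (rule tendsto_Lim[OF nontriv_hyper[OF assms(2)] t])
  then show ?thesis using t by simp
qed

lemma dquot_unique:
  assumes "\<alpha> \<noteq> 0" "(qt \<alpha> F A \<longlongrightarrow> L) (at x within {y. \<alpha> \<bullet> y \<noteq> 0})"
  shows "dquot \<alpha> F x A = L"
  unfolding dquot_qt by (rule tendsto_Lim[OF nontriv_hyper[OF assms(1)] assms(2)])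

lemma dquot_sum:
  assumes "\<alpha> \<noteq> 0" "\<And>k. k \<in> K \<Longrightarrow> cgood (G k)"
  shows "dquot \<alpha> (\<lambda>y. \<Sum>k\<in>K. G k y) x = (\<Sum>k\<in>K. dquot \<alpha> (G k) x)"
proof (rule ext)
  fix A
  have e: "qt \<alpha> (\<lambda>y. \<Sum>k\<in>K. G k y) A = (\<lambda>y. \<Sum>k\<in>K. qt \<alpha> (G k) A y)"
    by (rule ext) (simp add: qt_def sum_fun_apply sum_subtractf[symmetric] sum_divide_distrib)
  have "dquot \<alpha> (\<lambda>y. \<Sum>k\<in>K. G k y) x A = (\<Sum>k\<in>K. dquot \<alpha> (G k) x A)"
    by (rule dquot_unique[OF assms(1)], unfold e, rule tendsto_sum, rule dquot_tendsto[OF assms(2) assms(1)])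
  then show "dquot \<alpha> (\<lambda>y. \<Sum>k\<in>K. G k y) x A = (\<Sum>k\<in>K. dquot \<alpha> (G k) x) A"
    by (simp add: sum_fun_apply)
qed

lemma dquot_scale:
  assumes "\<alpha> \<noteq> 0" "cgood G"
  shows "dquot \<alpha> (\<lambda>y. cscale c (G y)) x = cscale c (dquot \<alpha> G x)"
proof (rule ext)
  fix A
  have e: "qt \<alpha> (\<lambda>y. cscale c (G y)) A = (\<lambda>y. c * qt \<alpha> G A y)"
    by (rule ext) (simp add: qt_def algebra_simps)
  have "dquot \<alpha> (\<lambda>y. cscale c (G y)) x A = c * dquot \<alpha> G x A"
    by (rule dquot_unique[OF assms(1)], unfold e, rule tendsto_mult_left, rule dquot_tendsto[OF assms(2) assms(1)])
  then show "dquot \<alpha> (\<lambda>y. cscale c (G y)) x A = cscale c (dquot \<alpha> G x) A" by simp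
qed

lemma dquot_cmul:
  assumes "\<alpha> \<noteq> 0" "cgood G"
  shows "dquot \<alpha> (\<lambda>y. cmul a (G y)) x = cmul a (dquot \<alpha> G x :: 'd::{finite,linorder} cliff)"
proof (rule ext)
  fix C
  have e: "qt \<alpha> (\<lambda>y. cmul a (G y)) C = (\<lambda>y. \<Sum>X\<in>UNIV. blade_sign X (sd X C) * a X * qt \<alpha> G (sd X C) y)"
    by (rule ext) (simp add: qt_def cmul_alt sum_subtractf[symmetric] sum_divide_distrib algebra_simps)
  have "dquot \<alpha> (\<lambda>y. cmul a (G y)) x C = (\<Sum>X\<in>UNIV. blade_sign X (sd X C) * a X * dquot \<alpha> G x (sd X C))"
    by (rule dquot_unique[OF assms(1)], unfold e, intro tendsto_sum tendsto_mult_left, rule dquot_tendsto[OF assms(2) assms(1)])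
  then show "dquot \<alpha> (\<lambda>y. cmul a (G y)) x C = cmul a (dquot \<alpha> G x) C"
    by (simp add: cmul_alt[of a "dquot \<alpha> G x"])
qed

lemma dquot_coord:
  assumes "\<alpha> \<noteq> 0" "cgood G"
  shows "dquot \<alpha> (\<lambda>y. cscale (complex_of_real (y $ j)) (G y)) x =
    cscale (complex_of_real (x $ j)) (dquot \<alpha> G x) + cscale (complex_of_real (2 * \<alpha> $ j / (\<alpha> \<bullet> \<alpha>))) (G (refl \<alpha> x))"
proof (rule ext)
  fix A
  let ?c = "complex_of_real (2 * \<alpha> $ j / (\<alpha> \<bullet> \<alpha>))"
  have ev: "eventually (\<lambda>y. qt \<alpha> (\<lambda>y. cscale (complex_of_real (y $ j)) (G y)) A y =
      complex_of_real (y $ j) * qt \<alpha> G A y + ?c * G (refl \<alpha> y) A) (at x within {y. \<alpha> \<bullet> y \<noteq> 0})"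
    unfolding eventually_at_filter
  proof (rule always_eventually, intro allI impI)
    fix y assume "y \<in> {y. \<alpha> \<bullet> y \<noteq> 0}"
    then have ne: "complex_of_real (\<alpha> \<bullet> y) \<noteq> 0" by simp
    have rj: "complex_of_real (refl \<alpha> y $ j) = complex_of_real (y $ j) - complex_of_real (\<alpha> \<bullet> y) * ?c"
      by (simp add: refl_nth)
    show "qt \<alpha> (\<lambda>y. cscale (complex_of_real (y $ j)) (G y)) A y =
      complex_of_real (y $ j) * qt \<alpha> G A y + ?c * G (refl \<alpha> y) A"
      unfolding qt_def cscale_apply rj using ne by (simp add: field_simps)
  qed
  have t1: "((\<lambda>y. complex_of_real (y $ j)) \<longlongrightarrow> complex_of_real (x $ j)) (at x within {y. \<alpha> \<bullet> y \<noteq> 0})"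
    by (intro tendsto_intros)
  have c2: "isCont (\<lambda>y. G (refl \<alpha> y) A) x"
    using continuous_at_compose[OF refl_cont cgood_cont[OF assms(2)]] by (simp add: o_def)
  have t2: "((\<lambda>y. G (refl \<alpha> y) A) \<longlongrightarrow> G (refl \<alpha> x) A) (at x within {y. \<alpha> \<bullet> y \<noteq> 0})"
    using isCont_tendsto_compose[OF c2 tendsto_ident_at] by simp
  have "(qt \<alpha> (\<lambda>y. cscale (complex_of_real (y $ j)) (G y)) A \<longlongrightarrow>
     complex_of_real (x $ j) * dquot \<alpha> G x A + ?c * G (refl \<alpha> x) A) (at x within {y. \<alpha> \<bullet> y \<noteq> 0})"
    unfolding tendsto_cong[OF ev]
    by (intro tendsto_add tendsto_mult t1 t2 tendsto_const dquot_tendsto[OF assms(2) assms(1)])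
  then show "dquot \<alpha> (\<lambda>y. cscale (complex_of_real (y $ j)) (G y)) x A =
    (cscale (complex_of_real (x $ j)) (dquot \<alpha> G x) + cscale ?c (G (refl \<alpha> x))) A"
    by (simp add: dquot_unique[OF assms(1)])
qed


lemma dunkl_sum:
  assumes Rp: "\<forall>\<alpha>\<in>Rp. \<alpha> \<noteq> 0" and G: "\<And>k. k \<in> K \<Longrightarrow> cgood (G k)"
  shows "dunkl Rp \<kappa> i (\<lambda>y. \<Sum>k\<in>K. G k y) x = (\<Sum>k\<in>K. dunkl Rp \<kappa> i (G k) x)"
proof -
  have "dunkl Rp \<kappa> i (\<lambda>y. \<Sum>k\<in>K. G k y) x =
    (\<Sum>k\<in>K. partial i (G k) x) + (\<Sum>\<alpha>\<in>Rp. \<Sum>k\<in>K. cscale (complex_of_real (\<kappa> \<alpha> * \<alpha> $ i)) (dquot \<alpha> (G k) x))"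
    unfolding dunkl_def
    by (intro arg_cong2[where f="(+)"] refl sum.cong) (simp_all add: partial_sum[OF G] dquot_sum[OF _ G] Rp cscale_sum)
  also have "\<dots> = (\<Sum>k\<in>K. dunkl Rp \<kappa> i (G k) x)"
    unfolding dunkl_def by (subst sum.swap) (simp add: sum.distrib)
  finally show ?thesis .
qed

lemma dunkl_scale:
  assumes Rp: "\<forall>\<alpha>\<in>Rp. \<alpha> \<noteq> 0" and G: "cgood G"
  shows "dunkl Rp \<kappa> i (\<lambda>y. cscale c (G y)) x = cscale c (dunkl Rp \<kappa> i G x)"
  unfolding dunkl_def partial_scale[OF G] cscale_add cscale_sum
  by (intro arg_cong2[where f="(+)"] refl sum.cong) (simp_all add: dquot_scale[OF _ G] Rp mult.commute)

lemma dunkl_cmul: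
  assumes Rp: "\<forall>\<alpha>\<in>Rp. \<alpha> \<noteq> 0" and G: "cgood G"
  shows "dunkl Rp \<kappa> i (\<lambda>y. cmul a (G y)) x = cmul a (dunkl Rp \<kappa> i G x :: 'd::{finite,linorder} cliff)"
  unfolding dunkl_def partial_cmul[OF G] cmul_add_right cmul_sum_right
  by (intro arg_cong2[where f="(+)"] refl sum.cong) (simp_all add: dquot_cmul[OF _ G] Rp cmul_scale_right)

lemma dirac_lin:
  assumes Rp: "\<forall>\<alpha>\<in>Rp. \<alpha> \<noteq> 0" and G: "\<And>k. k \<in> K \<Longrightarrow> cgood (G k)"
  shows "dunkl_dirac Rp \<kappa> (\<lambda>y. \<Sum>k\<in>K. cscale (a k) (G k y)) x =
    (\<Sum>k\<in>K. cscale (a k) (dunkl_dirac Rp \<kappa> (G k) x :: 'd::{finite,linorder} cliff))"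
proof -
  have "dunkl_dirac Rp \<kappa> (\<lambda>y. \<Sum>k\<in>K. cscale (a k) (G k y)) x =
     (\<Sum>i\<in>UNIV. \<Sum>k\<in>K. cscale (a k) (cmul (cgen i) (dunkl Rp \<kappa> i (G k) x)))"
    unfolding dunkl_dirac_def
    by (intro sum.cong refl)
       (simp add: dunkl_sum[OF Rp] cgood_scale G dunkl_scale[OF Rp] cmul_sum_right cmul_scale_right)
  also have "\<dots> = (\<Sum>k\<in>K. cscale (a k) (dunkl_dirac Rp \<kappa> (G k) x))"
    unfolding dunkl_dirac_def cscale_sum by (rule sum.swap)
  finally show ?thesis .
qed

lemma cscale_if: "cscale (if P then 1 else 0) v = (if P then v else 0)" by simp

lemma cvec_mul: "cmul (cvec x) w = (\<Sum>j\<in>UNIV. cscale (complex_of_real (x $ j)) (cmul (cgen j) w :: 'd::{finite,linorder} cliff))"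
  unfolding cvec_apply cmul_sum_left cmul_scale_left ..

lemma g_expand: "(\<lambda>y. cmul (cvec y) (f y)) =
   (\<lambda>y. \<Sum>j\<in>UNIV. cscale (complex_of_real (y $ j)) (cmul (cgen j) (f y) :: 'd::{finite,linorder} cliff))"
  by (rule ext) (rule cvec_mul)

lemma partial_g:
  assumes f: "cgood f"
  shows "partial i (\<lambda>y. cmul (cvec y) (f y)) x = cmul (cgen i) (f x) + cmul (cvec x) (partial i f x :: 'd::{finite,linorder} cliff)"
proof -
  have gj: "\<And>j. cgood (\<lambda>y. cmul (cgen j) (f y) :: 'd cliff)" by (rule cgood_cmul[OF cgood_const f])
  have "partial i (\<lambda>y. cmul (cvec y) (f y)) x =
      (\<Sum>j\<in>UNIV. cscale (if i = j then 1 else 0) (cmul (cgen j) (f x)) + cscale (complex_of_real (x $ j)) (cmul (cgen j) (partial i f x)))"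
    unfolding g_expand
    by (simp add: partial_sum cgood_coord gj partial_coord partial_cmul f)
  also have "\<dots> = cmul (cgen i) (f x) + cmul (cvec x) (partial i f x)"
    by (simp add: sum.distrib cvec_mul cscale_if)
  finally show ?thesis .
qed

lemma dquot_g:
  assumes f: "cgood f" and a: "\<alpha> \<noteq> 0"
  shows "dquot \<alpha> (\<lambda>y. cmul (cvec y) (f y)) x = cmul (cvec x) (dquot \<alpha> f x) +
     cscale (complex_of_real (2 / (\<alpha> \<bullet> \<alpha>))) (cmul (cvec \<alpha>) (f (refl \<alpha> x)) :: 'd::{finite,linorder} cliff)"
proof -
  have gj: "\<And>j. cgood (\<lambda>y. cmul (cgen j) (f y) :: 'd cliff)" by (rule cgood_cmul[OF cgood_const f])
  have "dquot \<alpha> (\<lambda>y. cmul (cvec y) (f y)) x =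
      (\<Sum>j\<in>UNIV. cscale (complex_of_real (x $ j)) (cmul (cgen j) (dquot \<alpha> f x)) +
         cscale (complex_of_real (2 * \<alpha> $ j / (\<alpha> \<bullet> \<alpha>))) (cmul (cgen j) (f (refl \<alpha> x))))"
    unfolding g_expand
    by (simp add: dquot_sum a cgood_coord gj dquot_coord dquot_cmul f)
  also have "\<dots> = cmul (cvec x) (dquot \<alpha> f x) +
     cscale (complex_of_real (2 / (\<alpha> \<bullet> \<alpha>))) (cmul (cvec \<alpha>) (f (refl \<alpha> x)))"
    by (simp add: sum.distrib cvec_mul cscale_sum mult.commute)
  finally show ?thesis .
qed


lemma hvd_line:
  assumes "(h has_derivative h') (at (x + tz *\<^sub>R v))"
  shows "((\<lambda>t. h (x + t *\<^sub>R v)) has_vector_derivative h' v) (at tz)"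
proof -
  have l: "((\<lambda>t::real. x + t *\<^sub>R v) has_derivative (\<lambda>t. t *\<^sub>R v)) (at tz)"
    by (rule derivative_eq_intros | simp)+
  have "((\<lambda>t. h (x + t *\<^sub>R v)) has_derivative (\<lambda>t. h' (t *\<^sub>R v))) (at tz)"
    using has_derivative_compose[OF l assms] .
  moreover have "(\<lambda>t. h' (t *\<^sub>R v)) = (\<lambda>t. t *\<^sub>R h' v)"
    using has_derivative_bounded_linear[OF assms] by (simp add: linear_simps(5))
  ultimately show ?thesis unfolding has_vector_derivative_def by simp
qed

lemma partial_eq_deriv:
  assumes "\<forall>x. ((\<lambda>y. F y A) has_derivative h' x) (at x)"
  shows "partial i F x A = h' x (axis i 1)"
  by (rule partial_unique, rule hvd_line[where tz=0, simplified]) (use assms in simp)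

lemma euler_comp:
  assumes h: "\<forall>x. (h has_derivative h' x) (at x)"
    and hom: "\<forall>t y. h (t *\<^sub>R y) = complex_of_real t ^ N * h y"
  shows "h' x x = of_nat N * h x"
proof -
  have d1: "((\<lambda>t. h (0 + t *\<^sub>R x)) has_vector_derivative h' x x) (at 1)"
    by (rule hvd_line) (use h in simp)
  have r: "((\<lambda>t::real. t ^ N) has_field_derivative (real N)) (at 1)"
    using DERIV_pow[of N 1] by simp
  have d2: "((\<lambda>t. h (0 + t *\<^sub>R x)) has_vector_derivative of_nat N * h x) (at 1)"
  proof -
    have "((\<lambda>t. complex_of_real (t ^ N) * h x) has_vector_derivative
       (complex_of_real (1 ^ N) * 0 + complex_of_real (real N) * h x)) (at 1)"
      by (rule has_vector_derivative_mult[OF has_vector_derivative_of_real[OF r] has_vector_derivative_const])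
    moreover have "(\<lambda>t. h (0 + t *\<^sub>R x)) = (\<lambda>t. complex_of_real (t ^ N) * h x)"
      using hom by (simp add: fun_eq_iff)
    ultimately show ?thesis by simp
  qed
  show ?thesis by (rule vector_derivative_unique_at[OF d1 d2])
qed

lemma euler:
  assumes f: "cgood f" and hom: "\<forall>t y. f (t *\<^sub>R y) = cscale (complex_of_real t ^ N) (f y)"
  shows "(\<Sum>i\<in>UNIV. cscale (complex_of_real (x $ i)) (partial i f x)) = cscale (of_nat N) (f x)"
proof (rule ext)
  fix A
  obtain h' where h': "\<forall>x. ((\<lambda>y. f y A) has_derivative h' x) (at x)"
    using cp_deriv f unfolding cgood_def by blast
  have p: "\<And>i. partial i f x A = h' x (axis i 1)" by (rule partial_eq_deriv[where F=f and A=A, OF h'])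
  have lin: "linear (h' x)"
    using has_derivative_bounded_linear h' bounded_linear.linear by blast
  have "h' x x = h' x (\<Sum>i\<in>UNIV. (x $ i) *\<^sub>R axis i 1)"
    using basis_expansion[of x] by (simp add: scalar_mult_eq_scaleR)
  also have "\<dots> = (\<Sum>i\<in>UNIV. (x $ i) *\<^sub>R h' x (axis i 1))"
    by (simp add: real_vector.linear_sum[OF lin] linear_cmul[OF lin])
  finally have hx: "h' x x = (\<Sum>i\<in>UNIV. complex_of_real (x $ i) * h' x (axis i 1))"
    by (simp add: scaleR_conv_of_real)
  have e: "h' x x = of_nat N * f x A"
    by (rule euler_comp[OF h']) (use hom in simp)
  show "(\<Sum>i\<in>UNIV. cscale (complex_of_real (x $ i)) (partial i f x)) A = cscale (of_nat N) (f x) A"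
    using hx e by (simp add: sum_fun_apply p)
qed

lemma dquot_mul:
  assumes f: "cgood f" and a: "\<alpha> \<noteq> 0"
  shows "cscale (complex_of_real (\<alpha> \<bullet> x)) (dquot \<alpha> f x) = f x - f (refl \<alpha> x)"
proof (rule ext)
  fix A
  obtain Q where Q: "\<forall>x. isCont Q x" "\<forall>y. f y A - f (refl \<alpha> y) A = complex_of_real (\<alpha> \<bullet> y) * Q y"
    using cp_quot[of "\<lambda>y. f y A" \<alpha>] f unfolding cgood_def by blast
  have ev: "eventually (\<lambda>y. qt \<alpha> f A y = Q y) (at x within {y. \<alpha> \<bullet> y \<noteq> 0})"
    unfolding eventually_at_filter by (rule always_eventually) (auto simp: qt_def Q(2))
  have "(Q \<longlongrightarrow> Q x) (at x within {y. \<alpha> \<bullet> y \<noteq> 0})"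
    using isCont_tendsto_compose[OF Q(1)[rule_format] tendsto_ident_at] by simp
  then have t: "(qt \<alpha> f A \<longlongrightarrow> Q x) (at x within {y. \<alpha> \<bullet> y \<noteq> 0})"
    using tendsto_cong[OF ev] by simp
  have "dquot \<alpha> f x A = Q x" by (rule dquot_unique[OF a t])
  then show "cscale (complex_of_real (\<alpha> \<bullet> x)) (dquot \<alpha> f x) A = (f x - f (refl \<alpha> x)) A"
    using Q(2) by simp
qed

lemma dunkl_g:
  assumes Rp: "\<forall>\<alpha>\<in>Rp. \<alpha> \<noteq> 0" and f: "cgood f"
  shows "dunkl Rp \<kappa> i (\<lambda>y. cmul (cvec y) (f y)) x =
    cmul (cgen i) (f x) + cmul (cvec x) (dunkl Rp \<kappa> i f x) +
    (\<Sum>\<alpha>\<in>Rp. cscale (complex_of_real (\<kappa> \<alpha> * \<alpha> $ i) * complex_of_real (2 / (\<alpha> \<bullet> \<alpha>)))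
        (cmul (cvec \<alpha>) (f (refl \<alpha> x)) :: 'd::{finite,linorder} cliff))"
proof -
  have "dunkl Rp \<kappa> i (\<lambda>y. cmul (cvec y) (f y)) x =
    (cmul (cgen i) (f x) + cmul (cvec x) (partial i f x)) +
    (\<Sum>\<alpha>\<in>Rp. cscale (complex_of_real (\<kappa> \<alpha> * \<alpha> $ i)) (cmul (cvec x) (dquot \<alpha> f x)) +
       cscale (complex_of_real (\<kappa> \<alpha> * \<alpha> $ i) * complex_of_real (2 / (\<alpha> \<bullet> \<alpha>))) (cmul (cvec \<alpha>) (f (refl \<alpha> x))))"
    unfolding dunkl_def partial_g[OF f]
    by (intro arg_cong2[where f="(+)"] refl sum.cong) (simp_all add: dquot_g[OF f] Rp cscale_add)
  also have "\<dots> = cmul (cgen i) (f x) + cmul (cvec x) (dunkl Rp \<kappa> i f x) +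
    (\<Sum>\<alpha>\<in>Rp. cscale (complex_of_real (\<kappa> \<alpha> * \<alpha> $ i) * complex_of_real (2 / (\<alpha> \<bullet> \<alpha>)))
        (cmul (cvec \<alpha>) (f (refl \<alpha> x))))"
    unfolding dunkl_def cmul_add_right cmul_sum_right cmul_scale_right sum.distrib
    by (simp only: add_ac)
  finally show ?thesis .
qed


lemma P1: "(\<Sum>i\<in>UNIV. cmul (cgen i) (cmul (cgen i) w)) = cscale (- of_nat CARD('d)) (w :: 'd::{finite,linorder} cliff)"
proof -
  have "(\<Sum>i\<in>UNIV. cmul (cgen i) (cmul (cgen i) w)) = (\<Sum>i\<in>(UNIV::'d set). cscale (-1) w)"
    by (simp add: cmul_assoc[symmetric] cgen_sq cmul_scale_left)
  also have "\<dots> = cscale (- of_nat CARD('d)) w"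
    by (subst cscale_sum_left[symmetric]) simp
  finally show ?thesis .
qed

lemma P2: "cmul (cgen i) (cmul (cvec x) w) = cscale (- 2 * complex_of_real (x $ i)) w - cmul (cvec x) (cmul (cgen i) (w :: 'd::{finite,linorder} cliff))"
proof -
  have e: "cmul (cgen i) (cvec x) = cscale (- 2 * complex_of_real (x $ i)) cone - cmul (cvec x) (cgen i :: 'd cliff)"
    using cgen_cvec_anti[of i x] by (simp add: eq_diff_eq)
  show ?thesis
    by (simp add: cmul_assoc[symmetric] e cmul_diff_left cmul_scale_left)
qed

lemma P3: "(\<Sum>i\<in>UNIV. cscale (complex_of_real (a $ i)) (cmul (cgen i) w)) = cmul (cvec a) (w :: 'd::{finite,linorder} cliff)"
  by (simp add: cvec_mul)

lemma dirac_g: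
  assumes Rp: "\<forall>\<alpha>\<in>Rp. \<alpha> \<noteq> 0" and f: "cgood f"
    and hom: "\<forall>t y. f (t *\<^sub>R y) = cscale (complex_of_real t ^ N) (f y)"
  shows "dunkl_dirac Rp \<kappa> (\<lambda>y. cmul (cvec y) (f y)) x =
    cscale (- (of_nat CARD('d) + 2 * of_nat N + 2 * complex_of_real (\<Sum>\<alpha>\<in>Rp. \<kappa> \<alpha>))) (f x)
    - cmul (cvec x) (dunkl_dirac Rp \<kappa> f x :: 'd::{finite,linorder} cliff)"
proof -
  define T where "T i = dunkl Rp \<kappa> i f x" for i
  define k where "k \<alpha> = complex_of_real (\<kappa> \<alpha>)" for \<alpha>
  define fs where "fs \<alpha> = f (refl \<alpha> x)" for \<alpha>
  have D: "dunkl_dirac Rp \<kappa> f x = (\<Sum>i\<in>UNIV. cmul (cgen i) (T i))" unfolding dunkl_dirac_def T_def ..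
  have "dunkl_dirac Rp \<kappa> (\<lambda>y. cmul (cvec y) (f y)) x =
    (\<Sum>i\<in>UNIV. cmul (cgen i) (cmul (cgen i) (f x))) + (\<Sum>i\<in>UNIV. cmul (cgen i) (cmul (cvec x) (T i))) +
    (\<Sum>i\<in>UNIV. \<Sum>\<alpha>\<in>Rp. cscale (complex_of_real (\<kappa> \<alpha> * \<alpha> $ i) * complex_of_real (2 / (\<alpha> \<bullet> \<alpha>)))
        (cmul (cgen i) (cmul (cvec \<alpha>) (fs \<alpha>))))"
    unfolding dunkl_dirac_def dunkl_g[OF Rp f] T_def fs_def
    by (simp only: cmul_add_right cmul_sum_right cmul_scale_right sum.distrib)
  also have "(\<Sum>i\<in>UNIV. \<Sum>\<alpha>\<in>Rp. cscale (complex_of_real (\<kappa> \<alpha> * \<alpha> $ i) * complex_of_real (2 / (\<alpha> \<bullet> \<alpha>)))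
        (cmul (cgen i) (cmul (cvec \<alpha>) (fs \<alpha>)))) = (\<Sum>\<alpha>\<in>Rp. cscale (- 2 * k \<alpha>) (fs \<alpha>))"
  proof -
    have "(\<Sum>i\<in>UNIV. \<Sum>\<alpha>\<in>Rp. cscale (complex_of_real (\<kappa> \<alpha> * \<alpha> $ i) * complex_of_real (2 / (\<alpha> \<bullet> \<alpha>)))
        (cmul (cgen i) (cmul (cvec \<alpha>) (fs \<alpha>)))) =
      (\<Sum>\<alpha>\<in>Rp. cscale (k \<alpha> * complex_of_real (2 / (\<alpha> \<bullet> \<alpha>)))
         (\<Sum>i\<in>UNIV. cscale (complex_of_real (\<alpha> $ i)) (cmul (cgen i) (cmul (cvec \<alpha>) (fs \<alpha>)))))"
      by (subst sum.swap) (simp add: cscale_sum k_def mult_ac)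
    also have "\<dots> = (\<Sum>\<alpha>\<in>Rp. cscale (- 2 * k \<alpha>) (fs \<alpha>))"
    proof (rule sum.cong[OF refl])
      fix \<alpha> assume "\<alpha> \<in> Rp"
      then have aa: "\<alpha> \<bullet> \<alpha> \<noteq> 0" using Rp by simp
      have "cscale (k \<alpha> * complex_of_real (2 / (\<alpha> \<bullet> \<alpha>))) (\<Sum>i\<in>UNIV. cscale (complex_of_real (\<alpha> $ i)) (cmul (cgen i) (cmul (cvec \<alpha>) (fs \<alpha>))))
          = cscale (k \<alpha> * complex_of_real (2 / (\<alpha> \<bullet> \<alpha>)) * (- complex_of_real (\<alpha> \<bullet> \<alpha>))) (fs \<alpha>)"
        unfolding P3 by (simp add: cmul_assoc[symmetric] cvec_sq cmul_scale_left)
      also have "k \<alpha> * complex_of_real (2 / (\<alpha> \<bullet> \<alpha>)) * (- complex_of_real (\<alpha> \<bullet> \<alpha>)) = - 2 * k \<alpha>"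
        using aa by (simp add: field_simps)
      finally show "cscale (k \<alpha> * complex_of_real (2 / (\<alpha> \<bullet> \<alpha>))) (\<Sum>i\<in>UNIV. cscale (complex_of_real (\<alpha> $ i)) (cmul (cgen i) (cmul (cvec \<alpha>) (fs \<alpha>))))
          = cscale (- 2 * k \<alpha>) (fs \<alpha>)" .
    qed
    finally show ?thesis .
  qed
  also have "(\<Sum>i\<in>UNIV. cmul (cgen i) (cmul (cvec x) (T i))) =
      (\<Sum>i\<in>UNIV. cscale (- 2 * complex_of_real (x $ i)) (T i)) - cmul (cvec x) (dunkl_dirac Rp \<kappa> f x)"
    unfolding P2 D by (simp add: sum_subtractf cmul_sum_right)
  also have "(\<Sum>i\<in>UNIV. cscale (- 2 * complex_of_real (x $ i)) (T i)) =
      cscale (- 2) (cscale (of_nat N) (f x) + (\<Sum>\<alpha>\<in>Rp. cscale (k \<alpha>) (f x - fs \<alpha>)))"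
  proof -
    have "(\<Sum>i\<in>UNIV. cscale (complex_of_real (x $ i)) (T i)) =
       (\<Sum>i\<in>UNIV. cscale (complex_of_real (x $ i)) (partial i f x)) +
       (\<Sum>\<alpha>\<in>Rp. cscale (k \<alpha>) (cscale (\<Sum>i\<in>UNIV. complex_of_real (x $ i) * complex_of_real (\<alpha> $ i)) (dquot \<alpha> f x)))"
    proof -
      have "(\<Sum>i\<in>UNIV. \<Sum>\<alpha>\<in>Rp. cscale (complex_of_real (x $ i)) (cscale (complex_of_real (\<kappa> \<alpha> * \<alpha> $ i)) (dquot \<alpha> f x)))
         = (\<Sum>\<alpha>\<in>Rp. \<Sum>i\<in>UNIV. cscale (complex_of_real (x $ i)) (cscale (complex_of_real (\<kappa> \<alpha> * \<alpha> $ i)) (dquot \<alpha> f x)))"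
        by (rule sum.swap)
      also have "\<dots> = (\<Sum>\<alpha>\<in>Rp. cscale (k \<alpha>) (cscale (\<Sum>i\<in>UNIV. complex_of_real (x $ i) * complex_of_real (\<alpha> $ i)) (dquot \<alpha> f x)))"
        by (intro sum.cong refl) (simp add: k_def cscale_sum_left[symmetric] sum_distrib_left mult_ac)
      finally show ?thesis
        unfolding T_def dunkl_def cscale_add sum.distrib cscale_sum by simp
    qed
    also have "\<dots> = cscale (of_nat N) (f x) + (\<Sum>\<alpha>\<in>Rp. cscale (k \<alpha>) (f x - fs \<alpha>))"
    proof -
      have "\<And>\<alpha>. \<alpha> \<in> Rp \<Longrightarrow> cscale (\<Sum>i\<in>UNIV. complex_of_real (x $ i) * complex_of_real (\<alpha> $ i)) (dquot \<alpha> f x) = f x - fs \<alpha>"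
      proof -
        fix \<alpha> assume "\<alpha> \<in> Rp"
        then have a: "\<alpha> \<noteq> 0" using Rp by simp
        have "(\<Sum>i\<in>UNIV. complex_of_real (x $ i) * complex_of_real (\<alpha> $ i)) = complex_of_real (\<alpha> \<bullet> x)"
          by (simp add: inner_vec_def mult.commute)
        then show "cscale (\<Sum>i\<in>UNIV. complex_of_real (x $ i) * complex_of_real (\<alpha> $ i)) (dquot \<alpha> f x) = f x - fs \<alpha>"
          using dquot_mul[OF f a, of x] by (simp add: fs_def)
      qed
      then show ?thesis by (simp add: euler[OF f hom])
    qed
    finally have "(\<Sum>i\<in>UNIV. cscale (complex_of_real (x $ i)) (T i)) = cscale (of_nat N) (f x) + (\<Sum>\<alpha>\<in>Rp. cscale (k \<alpha>) (f x - fs \<alpha>))" .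
    moreover have "(\<Sum>i\<in>UNIV. cscale (- 2 * complex_of_real (x $ i)) (T i)) = cscale (- 2) (\<Sum>i\<in>UNIV. cscale (complex_of_real (x $ i)) (T i))"
      by (simp add: cscale_sum)
    ultimately show ?thesis by simp
  qed
  finally have E: "dunkl_dirac Rp \<kappa> (\<lambda>y. cmul (cvec y) (f y)) x =
     cscale (- of_nat CARD('d)) (f x) +
     (cscale (- 2) (cscale (of_nat N) (f x) + (\<Sum>\<alpha>\<in>Rp. cscale (k \<alpha>) (f x - fs \<alpha>))) - cmul (cvec x) (dunkl_dirac Rp \<kappa> f x)) +
     (\<Sum>\<alpha>\<in>Rp. cscale (- 2 * k \<alpha>) (fs \<alpha>))"
    by (simp only: P1)
  show ?thesis
  proof (rule ext)
    fix A
    show "dunkl_dirac Rp \<kappa> (\<lambda>y. cmul (cvec y) (f y)) x A =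
       (cscale (- (of_nat CARD('d) + 2 * of_nat N + 2 * complex_of_real (\<Sum>\<alpha>\<in>Rp. \<kappa> \<alpha>))) (f x) - cmul (cvec x) (dunkl_dirac Rp \<kappa> f x)) A"
      unfolding E by (simp add: sum_fun_apply k_def algebra_simps sum_subtractf sum.distrib sum_distrib_left sum_distrib_right sum_negf)
  qed
qed


definition fk :: "'d::{finite,linorder} cfun \<Rightarrow> nat \<Rightarrow> 'd cfun" where
  "fk P k y = cmul (cpow (cvec y) k) (P y)"

primrec bb :: "complex \<Rightarrow> complex \<Rightarrow> nat \<Rightarrow> nat \<Rightarrow> complex" where
  "bb d g n 0 = 0"
| "bb d g n (Suc k) = - (d + 2 * of_nat (n + k) + 2 * g) - bb d g n k"

definition spl :: "'d::{finite,linorder} cfun \<Rightarrow> nat \<Rightarrow> 'd cfun \<Rightarrow> bool" where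
  "spl P m G \<longleftrightarrow> (\<exists>a. \<forall>y. G y = (\<Sum>j<m. cscale (a j) (fk P j y)))"

lemma cpow_add: "cpow a (j + k) = cmul (cpow a j) (cpow (a::'d::{finite,linorder} cliff) k)"
  by (induction j) (simp_all add: cmul_assoc)

lemma fk_Suc: "fk P (Suc k) y = cmul (cvec y) (fk P k y)"
  by (simp add: fk_def cmul_assoc)

lemma fk_0: "fk P 0 = P"
  by (rule ext) (simp add: fk_def)

lemma fk_good: "cgood P \<Longrightarrow> cgood (fk P k)"
  unfolding fk_def[abs_def] by (intro cgood_cmul cgood_cpow)

lemma cvec_scale: "cvec (t *\<^sub>R y) = cscale (complex_of_real t) (cvec y :: 'd::{finite,linorder} cliff)"
  by (simp add: cvec_apply cscale_sum mult.commute)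

lemma cpow_scale: "cpow (cscale c a) k = cscale (c ^ k) (cpow (a::'d::{finite,linorder} cliff) k)"
  by (induction k) (simp_all only: cpow.simps cmul_scale_left cmul_scale_right cscale_cscale power_0 power_Suc cscale_one mult.commute)

lemma fk_hom:
  assumes "\<forall>t y. P (t *\<^sub>R y) = cscale (complex_of_real t ^ n) (P y)"
  shows "fk P k (t *\<^sub>R y) = cscale (complex_of_real t ^ (n + k)) (fk P k y)"
  using assms by (simp add: fk_def cvec_scale cpow_scale cmul_scale_left cmul_scale_right power_add mult.commute)

lemma cpow_even: "cpow (cvec x) (2 * m) = cscale ((- complex_of_real (x \<bullet> x)) ^ m) (cone :: 'd::{finite,linorder} cliff)"
proof (induction m)
  case 0 then show ?case by simp
next
  case (Suc m)
  have "cpow (cvec x) (2 * Suc m) = cmul (cmul (cvec x) (cvec x)) (cpow (cvec x) (2 * m))"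
    by (simp add: cmul_assoc)
  then show ?case using Suc by (simp only: cvec_sq cmul_scale_left cmul_scale_right cmul_one_left cscale_cscale power_Suc mult.commute)
qed

lemma spl_fk: "j < m \<Longrightarrow> spl P m (fk P j)"
  unfolding spl_def by (intro exI[of _ "\<lambda>i. if i = j then 1 else 0"]) (simp add: cscale_if)

lemma spl_add: "spl P m F \<Longrightarrow> spl P m G \<Longrightarrow> spl P m (\<lambda>y. F y + G y)"
  unfolding spl_def
proof (elim exE)
  fix a b assume a: "\<forall>y. F y = (\<Sum>j<m. cscale (a j) (fk P j y))" and b: "\<forall>y. G y = (\<Sum>j<m. cscale (b j) (fk P j y))"
  show "\<exists>c. \<forall>y. F y + G y = (\<Sum>j<m. cscale (c j) (fk P j y))"
    by (intro exI[of _ "\<lambda>j. a j + b j"]) (simp add: a b cscale_add_left sum.distrib)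
qed

lemma spl_scale: "spl P m G \<Longrightarrow> spl P m (\<lambda>y. cscale c (G y))"
  unfolding spl_def
proof (elim exE)
  fix b assume b: "\<forall>y. G y = (\<Sum>j<m. cscale (b j) (fk P j y))"
  show "\<exists>a. \<forall>y. cscale c (G y) = (\<Sum>j<m. cscale (a j) (fk P j y))"
    by (intro exI[of _ "\<lambda>j. c * b j"]) (simp add: b cscale_sum)
qed

lemma spl_zero: "spl P m (\<lambda>y. 0)"
  unfolding spl_def by (intro exI[of _ "\<lambda>j. 0"]) simp

lemma spl_diff: "spl P m F \<Longrightarrow> spl P m G \<Longrightarrow> spl P m (\<lambda>y. F y - G y)"
  using spl_add[of P m F "\<lambda>y. cscale (-1) (G y)"] spl_scale[of P m G "-1"]
  by (simp add: cscale_uminus_left)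

lemma spl_sum: "(\<And>k. k \<in> K \<Longrightarrow> spl P m (G k)) \<Longrightarrow> spl P m (\<lambda>y. \<Sum>k\<in>K. G k y)"
proof (induction K rule: infinite_finite_induct)
  case (infinite A)
  have "(\<lambda>y. \<Sum>k\<in>A. G k y) = (\<lambda>y. 0)" by (rule ext) (rule sum.infinite[OF infinite(1)])
  then show ?case using spl_zero by (simp only:)
next
  case empty then show ?case using spl_zero by (simp only: sum.empty)
next
  case (insert x F)
  have e: "(\<lambda>y. \<Sum>k\<in>insert x F. G k y) = (\<lambda>y. G x y + (\<Sum>k\<in>F. G k y))"
    by (rule ext) (rule sum.insert[OF insert(1,2)])
  have a: "spl P m (G x)" by (rule insert.prems) simp
  have b: "spl P m (\<lambda>y. \<Sum>k\<in>F. G k y)" by (rule insert.IH) (rule insert.prems, simp)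
  show ?case unfolding e by (rule spl_add[OF a b])
qed

lemma spl_mono:
  assumes "m \<le> m'" "spl P m G" shows "spl P m' G"
proof -
  obtain a where a: "\<forall>y. G y = (\<Sum>j<m. cscale (a j) (fk P j y))" using assms(2) unfolding spl_def by blast
  have "\<forall>y. G y = (\<Sum>j<m'. cscale (if j < m then a j else 0) (fk P j y))"
  proof
    fix y
    have "(\<Sum>j<m'. cscale (if j < m then a j else 0) (fk P j y)) = (\<Sum>j<m. cscale (if j < m then a j else 0) (fk P j y))"
      by (rule sum.mono_neutral_right) (use assms(1) in auto)
    then show "G y = (\<Sum>j<m'. cscale (if j < m then a j else 0) (fk P j y))" using a by simp
  qed
  then show ?thesis unfolding spl_def by (rule exI[of _ "\<lambda>j. if j < m then a j else 0"])
qed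

lemma spl_extend:
  assumes "spl P m R"
  shows "\<exists>a. a m = c \<and> (\<forall>y. cscale c (fk P m y) + R y = (\<Sum>j<Suc m. cscale (a j) (fk P j y)))"
proof -
  obtain a where a: "\<forall>y. R y = (\<Sum>j<m. cscale (a j) (fk P j y))" using assms unfolding spl_def by blast
  have "\<forall>y. cscale c (fk P m y) + R y = (\<Sum>j<Suc m. cscale ((a(m := c)) j) (fk P j y))"
    by (simp add: a add.commute)
  then show ?thesis by (intro exI[of _ "a(m := c)"]) simp
qed

lemma spl_good: "cgood P \<Longrightarrow> spl P m G \<Longrightarrow> cgood G"
proof -
  assume P: "cgood P" and "spl P m G"
  then obtain a where a: "\<forall>y. G y = (\<Sum>j<m. cscale (a j) (fk P j y))" unfolding spl_def by blast
  then have "G = (\<lambda>y. \<Sum>j<m. cscale (a j) (fk P j y))" by (simp add: fun_eq_iff)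
  then show "cgood G" by (simp add: cgood_sum cgood_scale fk_good[OF P])
qed


definition spH :: "(real,'d::{finite,linorder}) vec set \<Rightarrow> ((real,'d) vec \<Rightarrow> real) \<Rightarrow> 'd cfun \<Rightarrow> nat \<Rightarrow> 'd cfun \<Rightarrow> bool" where
  "spH Rp \<kappa> P m F \<longleftrightarrow> (\<exists>c. \<forall>x. F x = (\<Sum>s\<le>m. cscale (c s) (Hpoly Rp \<kappa> s P x)))"

lemma spH_H: "s \<le> m \<Longrightarrow> spH Rp \<kappa> P m (Hpoly Rp \<kappa> s P)"
  unfolding spH_def by (intro exI[of _ "\<lambda>i. if i = s then 1 else 0"]) (simp add: cscale_if)

lemma spH_add: "spH Rp \<kappa> P m F \<Longrightarrow> spH Rp \<kappa> P m G \<Longrightarrow> spH Rp \<kappa> P m (\<lambda>y. F y + G y)"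
  unfolding spH_def
proof (elim exE)
  fix a b assume a: "\<forall>y. F y = (\<Sum>j\<le>m. cscale (a j) (Hpoly Rp \<kappa> j P y))" and b: "\<forall>y. G y = (\<Sum>j\<le>m. cscale (b j) (Hpoly Rp \<kappa> j P y))"
  show "\<exists>c. \<forall>y. F y + G y = (\<Sum>j\<le>m. cscale (c j) (Hpoly Rp \<kappa> j P y))"
    by (intro exI[of _ "\<lambda>j. a j + b j"]) (simp add: a b cscale_add_left sum.distrib)
qed

lemma spH_scale: "spH Rp \<kappa> P m G \<Longrightarrow> spH Rp \<kappa> P m (\<lambda>y. cscale c (G y))"
  unfolding spH_def
proof (elim exE)
  fix b assume b: "\<forall>y. G y = (\<Sum>j\<le>m. cscale (b j) (Hpoly Rp \<kappa> j P y))"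
  show "\<exists>a. \<forall>y. cscale c (G y) = (\<Sum>j\<le>m. cscale (a j) (Hpoly Rp \<kappa> j P y))"
    by (intro exI[of _ "\<lambda>j. c * b j"]) (simp add: b cscale_sum)
qed

lemma spH_zero: "spH Rp \<kappa> P m (\<lambda>y. 0)"
  unfolding spH_def by (intro exI[of _ "\<lambda>j. 0"]) simp

lemma spH_diff: "spH Rp \<kappa> P m F \<Longrightarrow> spH Rp \<kappa> P m G \<Longrightarrow> spH Rp \<kappa> P m (\<lambda>y. F y - G y)"
  using spH_add[of Rp \<kappa> P m F "\<lambda>y. cscale (-1) (G y)"] spH_scale[of Rp \<kappa> P m G "-1"]
  by (simp add: cscale_uminus_left)

lemma spH_sum: "(\<And>k. k \<in> K \<Longrightarrow> spH Rp \<kappa> P m (G k)) \<Longrightarrow> spH Rp \<kappa> P m (\<lambda>y. \<Sum>k\<in>K. G k y)"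
proof (induction K rule: infinite_finite_induct)
  case (infinite A)
  have "(\<lambda>y. \<Sum>k\<in>A. G k y) = (\<lambda>y. 0)" by (rule ext) (rule sum.infinite[OF infinite(1)])
  then show ?case using spH_zero by (simp only:)
next
  case empty then show ?case using spH_zero by (simp only: sum.empty)
next
  case (insert x F)
  have e: "(\<lambda>y. \<Sum>k\<in>insert x F. G k y) = (\<lambda>y. G x y + (\<Sum>k\<in>F. G k y))"
    by (rule ext) (rule sum.insert[OF insert(1,2)])
  have a: "spH Rp \<kappa> P m (G x)" by (rule insert.prems) simp
  have b: "spH Rp \<kappa> P m (\<lambda>y. \<Sum>k\<in>F. G k y)" by (rule insert.IH) (rule insert.prems, simp)
  show ?case unfolding e by (rule spH_add[OF a b])
qed

lemma spH_mono:
  assumes "m \<le> m'" "spH Rp \<kappa> P m G" shows "spH Rp \<kappa> P m' G"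
proof -
  obtain a where a: "\<forall>y. G y = (\<Sum>j\<le>m. cscale (a j) (Hpoly Rp \<kappa> j P y))" using assms(2) unfolding spH_def by blast
  have "\<forall>y. G y = (\<Sum>j\<le>m'. cscale (if j \<le> m then a j else 0) (Hpoly Rp \<kappa> j P y))"
  proof
    fix y
    have "(\<Sum>j\<le>m'. cscale (if j \<le> m then a j else 0) (Hpoly Rp \<kappa> j P y)) = (\<Sum>j\<le>m. cscale (if j \<le> m then a j else 0) (Hpoly Rp \<kappa> j P y))"
      by (rule sum.mono_neutral_right) (use assms(1) in auto)
    then show "G y = (\<Sum>j\<le>m'. cscale (if j \<le> m then a j else 0) (Hpoly Rp \<kappa> j P y))" using a by simp
  qed
  then show ?thesis unfolding spH_def by (rule exI[of _ "\<lambda>j. if j \<le> m then a j else 0"])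
qed

context
  fixes Rp :: "(real, 'd::{finite,linorder}) vec set" and \<kappa> :: "(real,'d) vec \<Rightarrow> real"
    and P :: "'d cfun" and n :: nat
  assumes Rp0: "\<forall>\<alpha>\<in>Rp. \<alpha> \<noteq> 0" and Pg: "cgood P"
    and Phom: "\<forall>t y. P (t *\<^sub>R y) = cscale (complex_of_real t ^ n) (P y)"
    and PD: "\<forall>x. dunkl_dirac Rp \<kappa> P x = 0"
begin

abbreviation "bk \<equiv> bb (of_nat CARD('d)) (complex_of_real (\<Sum>\<alpha>\<in>Rp. \<kappa> \<alpha>)) n"

lemma dirac_fk: "dunkl_dirac Rp \<kappa> (fk P k) x = cscale (bk k) (fk P (k - 1) x)"
proof (induction k arbitrary: x)
  case 0 then show ?case by (simp add: fk_0 PD)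
next
  case (Suc k)
  have e: "fk P (Suc k) = (\<lambda>y. cmul (cvec y) (fk P k y))" by (rule ext) (rule fk_Suc)
  have "dunkl_dirac Rp \<kappa> (fk P (Suc k)) x =
    cscale (- (of_nat CARD('d) + 2 * of_nat (n + k) + 2 * complex_of_real (\<Sum>\<alpha>\<in>Rp. \<kappa> \<alpha>))) (fk P k x)
    - cmul (cvec x) (cscale (bk k) (fk P (k - 1) x))"
  proof -
    have hk: "\<forall>t y. fk P k (t *\<^sub>R y) = cscale (complex_of_real t ^ (n + k)) (fk P k y)"
      by (simp add: fk_hom[OF Phom])
    show ?thesis unfolding e Suc[symmetric] by (rule dirac_g[OF Rp0 fk_good[OF Pg] hk])
  qed
  also have "\<dots> = cscale (bk (Suc k)) (fk P k x)"
  proof (cases k)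
    case 0 then show ?thesis by simp
  next
    case (Suc j)
    then show ?thesis
      by (rule_tac ext) (simp add: cmul_scale_right fk_Suc[symmetric] algebra_simps)
  qed
  finally show ?case by simp
qed

lemma Dplus_fk: "Dplus Rp \<kappa> (fk P k) x = cscale (bk k) (fk P (k - 1) x) - cscale 2 (fk P (Suc k) x)"
  unfolding Dplus_def dirac_fk fk_Suc ..

lemma Dplus_lin:
  assumes G: "\<And>k. k \<in> K \<Longrightarrow> cgood (G k)"
  shows "Dplus Rp \<kappa> (\<lambda>y. \<Sum>k\<in>K. cscale (a k) (G k y)) x = (\<Sum>k\<in>K. cscale (a k) (Dplus Rp \<kappa> (G k) x))"
proof -
  have d: "dunkl_dirac Rp \<kappa> (\<lambda>y. \<Sum>k\<in>K. cscale (a k) (G k y)) x = (\<Sum>k\<in>K. cscale (a k) (dunkl_dirac Rp \<kappa> (G k) x))"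
    by (rule dirac_lin[OF Rp0 G])
  show ?thesis
    unfolding Dplus_def d
    by (simp add: cmul_sum_right cmul_scale_right cscale_sum cscale_minus sum_subtractf mult.commute)
qed

lemma H_dec: "\<exists>R. spl P s R \<and> Hpoly Rp \<kappa> s P = (\<lambda>y. cscale ((-2) ^ s) (fk P s y) + R y)"
proof (induction s)
  case 0
  have "Hpoly Rp \<kappa> 0 P = (\<lambda>y. cscale ((-2) ^ 0) (fk P 0 y) + 0)" by (simp add: Hpoly_def fk_0)
  then show ?case using spl_zero by blast
next
  case (Suc s)
  then obtain R where R: "spl P s R" and H: "Hpoly Rp \<kappa> s P = (\<lambda>y. cscale ((-2) ^ s) (fk P s y) + R y)" by blast
  obtain a where a: "a s = (-2) ^ s" "\<forall>y. cscale ((-2) ^ s) (fk P s y) + R y = (\<Sum>j<Suc s. cscale (a j) (fk P j y))"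
    using spl_extend[OF R] by blast
  have H2: "Hpoly Rp \<kappa> s P = (\<lambda>y. \<Sum>j<Suc s. cscale (a j) (fk P j y))" using H a(2) by simp
  have "Hpoly Rp \<kappa> (Suc s) P = Dplus Rp \<kappa> (Hpoly Rp \<kappa> s P)" by (simp add: Hpoly_def)
  also have "\<dots> = (\<lambda>x. \<Sum>j<Suc s. cscale (a j) (cscale (bk j) (fk P (j - 1) x) - cscale 2 (fk P (Suc j) x)))"
    unfolding H2 by (rule ext) (simp only: Dplus_lin[OF fk_good[OF Pg]] Dplus_fk)
  also have "\<dots> = (\<lambda>x. cscale ((-2) ^ Suc s) (fk P (Suc s) x) +
      ((\<Sum>j<Suc s. cscale (a j * bk j) (fk P (j - 1) x)) - (\<Sum>j<s. cscale (a j * 2) (fk P (Suc j) x))))"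
    by (rule ext) (simp add: cscale_minus sum_subtractf a(1) algebra_simps cscale_uminus_left)
  finally have E: "Hpoly Rp \<kappa> (Suc s) P = \<dots>" .
  have "spl P (Suc s) (\<lambda>x. (\<Sum>j<Suc s. cscale (a j * bk j) (fk P (j - 1) x)) - (\<Sum>j<s. cscale (a j * 2) (fk P (Suc j) x)))"
    by (intro spl_diff spl_sum spl_scale spl_fk) auto
  then show ?case using E by blast
qed

lemma H_spl: "spl P (Suc s) (Hpoly Rp \<kappa> s P)"
proof -
  obtain R where R: "spl P s R" and H: "Hpoly Rp \<kappa> s P = (\<lambda>y. cscale ((-2) ^ s) (fk P s y) + R y)"
    using H_dec by blast
  show ?thesis unfolding H
    by (intro spl_add spl_scale spl_fk spl_mono[OF _ R]) auto
qed

lemma H_R: "Hpoly Rp \<kappa> s P \<in> Rspace P"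
proof -
  obtain R where R: "spl P s R" and H: "Hpoly Rp \<kappa> s P = (\<lambda>y. cscale ((-2) ^ s) (fk P s y) + R y)"
    using H_dec by blast
  obtain a where a: "\<forall>y. cscale ((-2) ^ s) (fk P s y) + R y = (\<Sum>j<Suc s. cscale (a j) (fk P j y))"
    using spl_extend[OF R] by blast
  have "\<forall>x. Hpoly Rp \<kappa> s P x = (\<Sum>j\<le>s. cscale (a j) (cmul (cpow (cvec x) j) (P x)))"
    using a by (simp add: H lessThan_Suc_atMost fk_def)
  then show ?thesis unfolding Rspace_def by blast
qed

lemma indep_top:
  assumes x0: "x0 \<noteq> 0" "P x0 \<noteq> 0" and G: "spl P m G" and Z: "\<forall>x. cscale \<beta> (fk P m x) + G x = 0"
  shows "\<beta> = 0"
proof -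
  obtain a where a: "\<forall>y. G y = (\<Sum>j<m. cscale (a j) (fk P j y))" using G unfolding spl_def by blast
  define v where "v j = fk P j x0" for j
  have hom: "\<And>j t. fk P j (t *\<^sub>R x0) = cscale (complex_of_real t ^ (n + j)) (v j)"
    unfolding v_def by (rule fk_hom[OF Phom])
  have comp0: "\<beta> * v m A = 0" for A
  proof -
    define e where "e i = (if i = m then \<beta> * v m A else a i * v i A)" for i
    have roots: "complex_of_real ` (UNIV - {0}) \<subseteq> {z. (\<Sum>i\<le>m. e i * z ^ i) = 0}"
    proof
      fix z assume "z \<in> complex_of_real ` (UNIV - {0})"
      then obtain t where t: "t \<noteq> 0" "z = complex_of_real t" by auto
      have s1: "(\<Sum>i\<le>m. e i * z ^ i) = (\<Sum>i<m. a i * v i A * z ^ i) + \<beta> * v m A * z ^ m"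
      proof -
        have "(\<Sum>i\<le>m. e i * z ^ i) = (\<Sum>i<m. e i * z ^ i) + e m * z ^ m"
          by (simp add: lessThan_Suc_atMost[symmetric])
        moreover have "(\<Sum>i<m. e i * z ^ i) = (\<Sum>i<m. a i * v i A * z ^ i)"
          by (rule sum.cong) (auto simp: e_def)
        ultimately show ?thesis by (simp add: e_def)
      qed
      have "0 = (cscale \<beta> (fk P m (t *\<^sub>R x0)) + G (t *\<^sub>R x0)) A" using Z by simp
      also have "\<dots> = z ^ n * ((\<Sum>i<m. a i * v i A * z ^ i) + \<beta> * v m A * z ^ m)"
        by (simp add: a hom sum_fun_apply t(2) power_add algebra_simps sum_distrib_left)
      finally have "z ^ n * (\<Sum>i\<le>m. e i * z ^ i) = 0" unfolding s1 by simp
      moreover have "z ^ n \<noteq> 0" using t by simp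
      ultimately have "(\<Sum>i\<le>m. e i * z ^ i) = 0" by (simp only: mult_eq_0_iff) blast
      then show "z \<in> {z. (\<Sum>i\<le>m. e i * z ^ i) = 0}" by simp
    qed
    have inf: "infinite (complex_of_real ` (UNIV - {0}))"
    proof
      assume "finite (complex_of_real ` (UNIV - {0}))"
      moreover have "inj_on complex_of_real (UNIV - {0})" by (simp add: inj_on_def)
      ultimately have "finite (UNIV - {0::real})" by (rule finite_imageD)
      then show False by (simp add: infinite_UNIV_char_0)
    qed
    have "e m = 0"
    proof (rule ccontr)
      assume "e m \<noteq> 0"
      then have "\<exists>k. k \<le> m \<and> e k \<noteq> 0" by blast
      then have "finite {z. (\<Sum>i\<le>m. e i * z ^ i) = 0}" by (rule polyfun_rootbound_finite)
      then show False using inf roots finite_subset by blast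
    qed
    then show ?thesis by (simp add: e_def)
  qed
  show "\<beta> = 0"
  proof (rule ccontr)
    assume b: "\<beta> \<noteq> 0"
    have vm: "fk P m x0 = 0"
      by (rule ext) (use comp0 b in \<open>simp add: v_def\<close>)
    have "fk P (m + m) x0 = cmul (cpow (cvec x0) m) (fk P m x0)"
      by (simp add: fk_def cpow_add cmul_assoc)
    also have "\<dots> = 0" by (simp add: vm)
    finally have z: "fk P (2 * m) x0 = 0" by (simp add: mult_2)
    have "fk P (2 * m) x0 = cscale ((- complex_of_real (x0 \<bullet> x0)) ^ m) (P x0)"
      by (simp add: fk_def cpow_even cmul_scale_left)
    with z have z2: "cscale ((- complex_of_real (x0 \<bullet> x0)) ^ m) (P x0) = 0" by simp
    have nz: "(- complex_of_real (x0 \<bullet> x0)) ^ m \<noteq> 0" using x0(1) by simp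
    have "P x0 = 0"
    proof (rule ext)
      fix A show "P x0 A = 0 A" using fun_cong[OF z2, of A] nz x0(1) by simp
    qed
    with x0(2) show False by simp
  qed
qed

lemma indep:
  assumes x0: "x0 \<noteq> 0" "P x0 \<noteq> 0"
  shows "(\<forall>x. (\<Sum>s\<le>m. cscale (c s) (Hpoly Rp \<kappa> s P x)) = 0) \<Longrightarrow> \<forall>s\<le>m. c s = 0"
proof (induction m)
  case 0
  note Z = this
  obtain R where R: "spl P 0 R" and H: "Hpoly Rp \<kappa> 0 P = (\<lambda>y. cscale ((-2) ^ 0) (fk P 0 y) + R y)"
    using H_dec by blast
  have "\<forall>x. cscale (c 0) (fk P 0 x) + cscale (c 0) (R x) = 0"
  proof
    fix x
    have e0: "cscale (c 0) (Hpoly Rp \<kappa> 0 P x) = cscale (c 0) (fk P 0 x) + cscale (c 0) (R x)"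
      by (simp only: H cscale_add cscale_one power_0)
    have s0: "(\<Sum>s\<le>0. cscale (c s) (Hpoly Rp \<kappa> s P x)) = cscale (c 0) (Hpoly Rp \<kappa> 0 P x)" by simp
    have "cscale (c 0) (Hpoly Rp \<kappa> 0 P x) = 0" using Z[rule_format, of x] unfolding s0 .
    then show "cscale (c 0) (fk P 0 x) + cscale (c 0) (R x) = 0" using e0 by simp
  qed
  then have "c 0 = 0" by (rule indep_top[OF x0 spl_scale[OF R]])
  then show ?case by simp
next
  case (Suc m)
  obtain R where R: "spl P (Suc m) R" and H: "Hpoly Rp \<kappa> (Suc m) P = (\<lambda>y. cscale ((-2) ^ Suc m) (fk P (Suc m) y) + R y)"
    using H_dec by blast
  let ?G = "\<lambda>x. cscale (c (Suc m)) (R x) + (\<Sum>s<Suc m. cscale (c s) (Hpoly Rp \<kappa> s P x))"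
  have G: "spl P (Suc m) ?G"
    by (intro spl_add spl_scale R spl_sum spl_mono[OF _ H_spl]) auto
  have split: "\<And>x. (\<Sum>s\<le>Suc m. cscale (c s) (Hpoly Rp \<kappa> s P x)) =
     cscale (c (Suc m) * (-2) ^ Suc m) (fk P (Suc m) x) + ?G x"
    by (simp add: lessThan_Suc_atMost[symmetric] H cscale_add add_ac)
  have "c (Suc m) * (-2) ^ Suc m = 0"
  proof (rule indep_top[OF x0 G], rule allI)
    fix x
    have a1: "(\<Sum>s\<le>Suc m. cscale (c s) (Hpoly Rp \<kappa> s P x)) = 0" using Suc.prems by blast
    show "cscale (c (Suc m) * (-2) ^ Suc m) (fk P (Suc m) x) + ?G x = 0" using a1 unfolding split .
  qed
  then have cm: "c (Suc m) = 0" by simp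
  have "\<forall>x. (\<Sum>s\<le>m. cscale (c s) (Hpoly Rp \<kappa> s P x)) = 0"
  proof
    fix x
    have a1: "(\<Sum>s\<le>Suc m. cscale (c s) (Hpoly Rp \<kappa> s P x)) = 0" using Suc.prems by blast
    show "(\<Sum>s\<le>m. cscale (c s) (Hpoly Rp \<kappa> s P x)) = 0"
      using a1 unfolding sum.atMost_Suc cm cscale_zero add_0_right .
  qed
  then have "\<forall>s\<le>m. c s = 0" by (rule Suc.IH)
  then show ?case using cm le_Suc_eq by auto
qed

lemma fk_spH: "spH Rp \<kappa> P j (fk P j)"
proof (induction j rule: less_induct)
  case (less j)
  obtain R where R: "spl P j R" and H: "Hpoly Rp \<kappa> j P = (\<lambda>y. cscale ((-2) ^ j) (fk P j y) + R y)"
    using H_dec by blast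
  obtain a where a: "\<forall>y. R y = (\<Sum>i<j. cscale (a i) (fk P i y))" using R unfolding spl_def by blast
  have Rs: "spH Rp \<kappa> P j R"
  proof -
    have "R = (\<lambda>y. \<Sum>i<j. cscale (a i) (fk P i y))" using a by (simp add: fun_eq_iff)
    moreover have "spH Rp \<kappa> P j (\<lambda>y. \<Sum>i<j. cscale (a i) (fk P i y))"
      by (intro spH_sum spH_scale spH_mono[OF _ less.IH]) auto
    ultimately show ?thesis by simp
  qed
  have nz: "((-2::complex) ^ j) \<noteq> 0" by simp
  have "fk P j = (\<lambda>y. cscale (1 / (-2) ^ j) (Hpoly Rp \<kappa> j P y - R y))"
  proof (rule ext)
    fix y
    show "fk P j y = cscale (1 / (-2) ^ j) (Hpoly Rp \<kappa> j P y - R y)"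
      unfolding H using nz by (simp add: cscale_cscale)
  qed
  moreover have "spH Rp \<kappa> P j (\<lambda>y. cscale (1 / (-2) ^ j) (Hpoly Rp \<kappa> j P y - R y))"
    by (intro spH_scale spH_diff spH_H Rs) simp
  ultimately show ?case by (simp only:)
qed

lemma Rspace_spH: "F \<in> Rspace P \<Longrightarrow> \<exists>m. spH Rp \<kappa> P m F"
proof -
  assume "F \<in> Rspace P"
  then obtain m a where a: "\<forall>x. F x = (\<Sum>j\<le>m. cscale (a j) (cmul (cpow (cvec x) j) (P x)))"
    unfolding Rspace_def by blast
  have "F = (\<lambda>x. \<Sum>j\<le>m. cscale (a j) (fk P j x))" using a by (simp add: fun_eq_iff fk_def)
  moreover have "spH Rp \<kappa> P m (\<lambda>x. \<Sum>j\<le>m. cscale (a j) (fk P j x))"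
    by (intro spH_sum spH_scale spH_mono[OF _ fk_spH]) auto
  ultimately show ?thesis by blast
qed

end


theorem corollary3p1:
  fixes R Rp :: "((real, 'd::{finite,linorder}) vec) set"
    and \<kappa> :: "(real, 'd) vec \<Rightarrow> real"
    and n :: nat
    and P :: "(real, 'd) vec \<Rightarrow> 'd set \<Rightarrow> complex"
  assumes "card (UNIV :: 'd set) \<ge> 2"
    and "root_system R"
    and "positive_subsystem R Rp"
    and "multiplicity R \<kappa>"
    and "(\<Sum>\<alpha>\<in>Rp. \<kappa> \<alpha>) > 0"
    and "P \<in> Mspace Rp \<kappa> n"
    and "P \<noteq> (\<lambda>x. 0)"
  shows "is_basis_seq (\<lambda>s. Hpoly Rp \<kappa> s P) (Rspace P)"
proof -
  have Rp0: "\<forall>\<alpha>\<in>Rp. \<alpha> \<noteq> 0"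
    using assms(2,3) by (auto simp: root_system_def positive_subsystem_def)
  have hp: "homog_poly n P" and PD0: "dunkl_dirac Rp \<kappa> P = (\<lambda>x. 0)"
    using assms(6) by (auto simp: Mspace_def)
  have PD: "\<forall>x. dunkl_dirac Rp \<kappa> P x = 0" using PD0 by simp
  obtain c :: "('d \<Rightarrow> nat) \<Rightarrow> 'd cliff" where
    c: "\<forall>x. P x = (\<Sum>m\<in>{m. sum m UNIV = n}. cscale (\<Prod>i\<in>UNIV. complex_of_real (x $ i) ^ m i) (c m))"
    using hp unfolding homog_poly_def by blast
  have Pg: "cgood P"
    unfolding cgood_def
  proof
    fix A
    have e: "(\<lambda>x. P x A) = (\<lambda>x. \<Sum>m\<in>{m. sum m UNIV = n}. (\<Prod>i\<in>UNIV. complex_of_real (x $ i) ^ m i) * c m A)"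
      using c by (simp add: fun_eq_iff sum_fun_apply)
    show "cpoly (\<lambda>x. P x A)" unfolding e
      by (intro cp_sum cp_mult cp_prod cp_pow cp_coord cp_const)
  qed
  have Phom: "\<forall>t y. P (t *\<^sub>R y) = cscale (complex_of_real t ^ n) (P y)"
  proof (intro allI)
    fix t :: real and y :: "(real, 'd) vec"
    have pr: "(\<Prod>i\<in>UNIV. complex_of_real ((t *\<^sub>R y) $ i) ^ m i) = complex_of_real t ^ n * (\<Prod>i\<in>UNIV. complex_of_real (y $ i) ^ m i)"
      if "m \<in> {m. sum m UNIV = n}" for m
    proof -
      have "(\<Prod>i\<in>UNIV. complex_of_real ((t *\<^sub>R y) $ i) ^ m i) = (\<Prod>i\<in>UNIV. complex_of_real t ^ m i * complex_of_real (y $ i) ^ m i)"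
        by (simp add: power_mult_distrib)
      also have "\<dots> = complex_of_real t ^ (\<Sum>i\<in>UNIV. m i) * (\<Prod>i\<in>UNIV. complex_of_real (y $ i) ^ m i)"
        by (simp add: prod.distrib power_sum)
      finally show ?thesis using that by simp
    qed
    have "P (t *\<^sub>R y) = (\<Sum>m\<in>{m. sum m UNIV = n}. cscale (complex_of_real t ^ n) (cscale (\<Prod>i\<in>UNIV. complex_of_real (y $ i) ^ m i) (c m)))"
    proof -
      have "P (t *\<^sub>R y) = (\<Sum>m\<in>{m. sum m UNIV = n}. cscale (\<Prod>i\<in>UNIV. complex_of_real ((t *\<^sub>R y) $ i) ^ m i) (c m))"
        using c by blast
      also have "\<dots> = (\<Sum>m\<in>{m. sum m UNIV = n}. cscale (complex_of_real t ^ n) (cscale (\<Prod>i\<in>UNIV. complex_of_real (y $ i) ^ m i) (c m)))"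
        by (rule sum.cong[OF refl]) (simp only: pr cscale_cscale)
      finally show ?thesis .
    qed
    also have "\<dots> = cscale (complex_of_real t ^ n) (P y)"
      using c by (simp add: cscale_sum)
    finally show "P (t *\<^sub>R y) = cscale (complex_of_real t ^ n) (P y)" .
  qed
  obtain x1 where x1: "P x1 \<noteq> 0" using assms(7) by auto
  obtain x0 where x0: "x0 \<noteq> 0" "P x0 \<noteq> 0"
  proof (cases "x1 = 0")
    case False then show ?thesis using that x1 by blast
  next
    case True
    define y :: "(real, 'd) vec" where "y = axis undefined 1"
    have y0: "y \<noteq> 0" by (simp add: y_def)
    have n0: "n = 0"
    proof (rule ccontr)
      assume "n \<noteq> 0"
      then have "P (0 *\<^sub>R x1) = 0" using Phom[rule_format, of 0 x1] by (simp add: power_0_left)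
      then show False using x1 True by simp
    qed
    have "P (0 *\<^sub>R y) = P y" using Phom[rule_format, of 0 y] n0 by simp
    then have "P y = P x1" using True by simp
    then show ?thesis using that y0 x1 by simp
  qed
  show ?thesis
    unfolding is_basis_seq_def
  proof (intro conjI)
    show "\<forall>s. Hpoly Rp \<kappa> s P \<in> Rspace P" using H_R[OF Rp0 Pg Phom PD] by blast
  next
    show "\<forall>m c'. (\<forall>x. (\<Sum>s\<le>m. cscale (c' s) (Hpoly Rp \<kappa> s P x)) = 0) \<longrightarrow> (\<forall>s\<le>m. c' s = 0)"
      using indep[OF Rp0 Pg Phom PD x0] by blast
  next
    show "\<forall>f\<in>Rspace P. \<exists>m c. \<forall>x. f x = (\<Sum>s\<le>m. cscale (c s) (Hpoly Rp \<kappa> s P x))"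
    proof
      fix f assume "f \<in> Rspace P"
      then obtain m where "spH Rp \<kappa> P m f" using Rspace_spH[OF Rp0 Pg Phom PD] by blast
      then show "\<exists>m c. \<forall>x. f x = (\<Sum>s\<le>m. cscale (c s) (Hpoly Rp \<kappa> s P x))" unfolding spH_def by blast
    qed
  qed
qed


end
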